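(* Let $d$ be a positive integer and $q$ a prime power with $(d,q)\notin\{(1,2),(1,3),(2,2)\}$. Then every element of $\operatorname{GL}_d(q)$ is a product of two fixed-point-free elements of $\operatorname{GL}_d(q)$, where $A\in\operatorname{GL}_d(q)$ is called fixed-point-free if the only vector $v\in\mathbb{F}_q^d$ with $vA=v$ is $v=0$ (equivalently, $A$ is a derangement in the natural action of $\operatorname{GL}_d(q)$ on $\mathbb{F}_q^d\setminus\{0\}$).
   Context: $\operatorname{GL}_d(q)$ is the group of invertible $(d\times d)$-matrices over $\mathbb{F}_q$, acting on row vectors by right multiplication. *)

theory Defs
  imports "HOL-Analysis.Analysis"
begin

definition fixed_point_free :: "('a::field) ^'n^'n \<Rightarrow> bool" where
  "fixed_point_free A \<longleftrightarrow> (\<forall>v :: 'a^'n. v v* A = v \<longrightarrow> v = 0)"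

end

theory Submission
  imports Defs "Jordan_Normal_Form.Determinant" "Jordan_Normal_Form.Column_Operations"
begin


definition good :: "nat \<Rightarrow> 'a::field mat \<Rightarrow> bool" where
  "good n A \<longleftrightarrow> (\<exists>B \<in> carrier_mat n n. det B \<noteq> 0 \<and> det (B - 1\<^sub>m n) \<noteq> 0 \<and> det (A - B) \<noteq> 0)"

lemma goodI:
  assumes "B \<in> carrier_mat n n" "det B \<noteq> 0" "det (B - 1\<^sub>m n) \<noteq> 0" "det (A - B) \<noteq> 0"
  shows "good n A"
  using assms unfolding good_def by blast

lemma t1: fixes G :: "'a::field mat" 
  assumes G: "G \<in> carrier_mat k k" and R: "R \<in> carrier_mat k m" and X1: "X1 \<in> carrier_mat k k"
   and W: "W \<in> carrier_mat m k"
  shows "(G - X1) * 1\<^sub>m k + R * - W = G - X1 - R * W"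
proof -
  have "(G - X1) * 1\<^sub>m k = G - X1" using G X1 by simp
  moreover have "R * - W = - (R * W)" by (rule uminus_mult_right_mat) (use R W in auto)
  ultimately show ?thesis using G X1 R W by (intro eq_matI) auto
qed
lemma t2: fixes H :: "'a::field mat" 
  assumes H: "H \<in> carrier_mat m m" and X2: "X2 \<in> carrier_mat m m" and W: "W \<in> carrier_mat m k"
  shows "(H - X2) * W * 1\<^sub>m k + (H - X2) * - W = 0\<^sub>m m k"
proof -
  have "(H - X2) * W * 1\<^sub>m k = (H - X2) * W" using H X2 W by simp
  moreover have "(H - X2) * - W = - ((H - X2) * W)" by (rule uminus_mult_right_mat) (use H X2 W in auto)
  ultimately show ?thesis using H X2 W by (intro eq_matI) auto
qed
lemma t3: fixes X1 :: "'a::field mat" 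
  assumes X1: "X1 \<in> carrier_mat k k" and X2: "X2 \<in> carrier_mat m m" and Y: "Y \<in> carrier_mat m k"
  shows "four_block_mat X1 (0\<^sub>m k m) Y X2 - 1\<^sub>m (k+m) = four_block_mat (X1 - 1\<^sub>m k) (0\<^sub>m k m) Y (X2 - 1\<^sub>m m)"
  using X1 X2 Y by (intro eq_matI) (auto simp: four_block_mat_def)
lemma step:
  fixes A :: "'a::field mat"
  assumes A: "A \<in> carrier_mat (k+m) (k+m)"
  and sb: "split_block A k k = (G,R,S,H)"
  and X1: "X1 \<in> carrier_mat k k" "det X1 \<noteq> 0" "det (X1 - 1\<^sub>m k) \<noteq> 0"
  and X2: "X2 \<in> carrier_mat m m" "det X2 \<noteq> 0" "det (X2 - 1\<^sub>m m) \<noteq> 0" "det (H - X2) \<noteq> 0"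
  and W: "W \<in> carrier_mat m k" "det (G - X1 - R * W) \<noteq> 0"
  shows "good (k+m) A"
proof -
  have dA: "dim_row A = k + m" "dim_col A = k + m" using A by auto
  note sp = split_block[OF sb dA]
  have G: "G \<in> carrier_mat k k" and R: "R \<in> carrier_mat k m" and S: "S \<in> carrier_mat m k"
    and H: "H \<in> carrier_mat m m" and Aeq: "A = four_block_mat G R S H" using sp by auto
  define Y where "Y = S - (H - X2) * W"
  have Y: "Y \<in> carrier_mat m k" unfolding Y_def using S H X2 W by auto
  define B where "B = four_block_mat X1 (0\<^sub>m k m) Y X2"
  have B: "B \<in> carrier_mat (k+m) (k+m)" unfolding B_def using X1 X2 Y by auto
  have dB: "det B = det X1 * det X2" unfolding B_def
    by (rule det_four_block_mat_upper_right_zero[OF X1(1) refl Y X2(1)])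
  have B1: "B - 1\<^sub>m (k+m) = four_block_mat (X1 - 1\<^sub>m k) (0\<^sub>m k m) Y (X2 - 1\<^sub>m m)"
    unfolding B_def by (rule t3[OF X1(1) X2(1) Y])
  have dB1: "det (B - 1\<^sub>m (k+m)) = det (X1 - 1\<^sub>m k) * det (X2 - 1\<^sub>m m)" unfolding B1
    by (rule det_four_block_mat_upper_right_zero) (use X1 X2 Y in auto)
  have HW: "(H - X2) * W \<in> carrier_mat m k" using H X2 W by auto
  have AB: "A - B = four_block_mat (G - X1) R ((H - X2) * W) (H - X2)"
    unfolding Aeq B_def Y_def using G R S H X1 X2 W HW
    by (intro eq_matI) (auto simp: four_block_mat_def)
  define E where "E = four_block_mat (1\<^sub>m k) (0\<^sub>m k m) (- W) (1\<^sub>m m)"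
  have E: "E \<in> carrier_mat (k+m) (k+m)" unfolding E_def using W by auto
  have dE: "det E = 1" unfolding E_def
    by (subst det_four_block_mat_upper_right_zero) (use W in auto)
  have prod: "(A - B) * E = four_block_mat (G - X1 - R * W) R (0\<^sub>m m k) (H - X2)"
  proof -
    have GX: "G - X1 \<in> carrier_mat k k" using G X1 by auto
    have HX: "H - X2 \<in> carrier_mat m m" using H X2 by auto
    have mW: "- W \<in> carrier_mat m k" using W by auto
    have "(A - B) * E = four_block_mat ((G - X1) * 1\<^sub>m k + R * - W) ((G - X1) * 0\<^sub>m k m + R * 1\<^sub>m m)
       ((H - X2) * W * 1\<^sub>m k + (H - X2) * - W) ((H - X2) * W * 0\<^sub>m k m + (H - X2) * 1\<^sub>m m)"
      unfolding AB E_def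
      by (rule mult_four_block_mat[OF GX R HW HX one_carrier_mat zero_carrier_mat mW one_carrier_mat])
    also have "\<dots> = four_block_mat (G - X1 - R * W) R (0\<^sub>m m k) (H - X2)"
    proof (rule cong_four_block_mat)
      show "(G - X1) * 1\<^sub>m k + R * - W = G - X1 - R * W"
        by (rule t1[OF G R X1(1) W(1)])
      show "(G - X1) * 0\<^sub>m k m + R * 1\<^sub>m m = R" using G R X1 by auto
      show "(H - X2) * W * 1\<^sub>m k + (H - X2) * - W = 0\<^sub>m m k"
        by (rule t2[OF H X2(1) W(1)])
      show "(H - X2) * W * 0\<^sub>m k m + (H - X2) * 1\<^sub>m m = H - X2"
        unfolding right_mult_zero_mat[OF HW] right_mult_one_mat[OF HX] using HX by simp
    qed
    finally show ?thesis .
  qed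
  have "det ((A - B) * E) = det (A - B) * det E"
    by (rule det_mult) (use A B E in auto)
  moreover have "det ((A - B) * E) = det (G - X1 - R * W) * det (H - X2)"
    unfolding prod by (rule det_four_block_mat_lower_left_zero) (use G R X1 W H X2 in auto)
  ultimately have "det (A - B) \<noteq> 0" using dE W(2) X2(4) by auto
  then show ?thesis using B dB dB1 X1 X2 by (intro goodI[OF B]) auto
qed

lemma good_transpose:
  fixes A :: "'a::field mat"
  assumes A: "A \<in> carrier_mat n n" and g: "good n A"
  shows "good n (transpose_mat A)"
proof -
  obtain B where B: "B \<in> carrier_mat n n" "det B \<noteq> 0" "det (B - 1\<^sub>m n) \<noteq> 0" "det (A - B) \<noteq> 0"
    using g unfolding good_def by blast
  have "transpose_mat B - 1\<^sub>m n = transpose_mat (B - 1\<^sub>m n)"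
    using B by (simp add: transpose_minus)
  moreover have "transpose_mat A - transpose_mat B = transpose_mat (A - B)"
    using A B by (simp add: transpose_minus)
  moreover have "det (transpose_mat (B - 1\<^sub>m n)) = det (B - 1\<^sub>m n)"
    by (rule det_transpose) (use B in auto)
  moreover have "det (transpose_mat (A - B)) = det (A - B)"
    by (rule det_transpose) (use A B in auto)
  moreover have "det (transpose_mat B) = det B" by (rule det_transpose[OF B(1)])
  ultimately show ?thesis using A B
    by (intro goodI[of "transpose_mat B"]) auto
qed

definition reidx :: "(nat \<Rightarrow> nat) \<Rightarrow> nat \<Rightarrow> 'a mat \<Rightarrow> 'a mat" where
  "reidx p n A = mat n n (\<lambda>(i,j). A $$ (p i, p j))"

lemma det_reidx:
  fixes B :: "'a::field mat"
  assumes B: "B \<in> carrier_mat n n" and p: "p permutes {0..<n}"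
  shows "det (reidx p n B) = det B"
proof -
  define C where "C = mat n n (\<lambda>(i,j). B $$ (p i, j))"
  have C: "C \<in> carrier_mat n n" unfolding C_def by auto
  have dC: "det C = signof p * det B" unfolding C_def by (rule det_permute_rows[OF B p])
  define D where "D = mat n n (\<lambda>(i,j). (transpose_mat C) $$ (p i, j))"
  have dD: "det D = signof p * det (transpose_mat C)" unfolding D_def
    by (rule det_permute_rows[OF _ p]) (use C in auto)
  have pn: "\<And>i. i < n \<Longrightarrow> p i < n" using p by (auto dest: permutes_in_image)
  have "reidx p n B = transpose_mat D"
    unfolding reidx_def D_def C_def using pn by (intro eq_matI) auto
  moreover have "det (transpose_mat D) = det D" by (rule det_transpose) (auto simp: D_def)
  ultimately have "det (reidx p n B) = signof p * (signof p * det B)"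
    using dD dC det_transpose[OF C] by simp
  moreover have "signof p * signof p = (1::'a)"
    by (simp add: sign_def)
  ultimately show ?thesis by (metis mult.assoc mult_1)
qed

lemma good_reidx:
  fixes A :: "'a::field mat"
  assumes A: "A \<in> carrier_mat n n" and g: "good n A" and p: "p permutes {0..<n}"
  shows "good n (reidx p n A)"
proof -
  obtain B where B: "B \<in> carrier_mat n n" "det B \<noteq> 0" "det (B - 1\<^sub>m n) \<noteq> 0" "det (A - B) \<noteq> 0"
    using g unfolding good_def by blast
  have pn: "\<And>i. i < n \<Longrightarrow> p i < n" using p by (auto dest: permutes_in_image)
  have inj: "\<And>i j. p i = p j \<longleftrightarrow> i = j" using p by (metis permutes_inj injD)
  have e1: "reidx p n B - 1\<^sub>m n = reidx p n (B - 1\<^sub>m n)"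
    unfolding reidx_def using B pn inj by (intro eq_matI) auto
  have e2: "reidx p n A - reidx p n B = reidx p n (A - B)"
    unfolding reidx_def using A B pn by (intro eq_matI) auto
  have c: "reidx p n B \<in> carrier_mat n n" by (simp add: reidx_def)
  have d1: "det (reidx p n B) = det B" by (rule det_reidx[OF B(1) p])
  have d2: "det (reidx p n B - 1\<^sub>m n) = det (B - 1\<^sub>m n)" unfolding e1
    by (rule det_reidx[OF _ p]) (use B in auto)
  have d3: "det (reidx p n A - reidx p n B) = det (A - B)" unfolding e2
    by (rule det_reidx[OF _ p]) (use A B in auto)
  show ?thesis using B by (intro goodI[OF c]) (simp_all only: d1 d2 d3 not_False_eq_True)
qed

lemma good_reidx_back:
  fixes A :: "'a::field mat"
  assumes A: "A \<in> carrier_mat n n" and p: "p permutes {0..<n}" and g: "good n (reidx p n A)"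
  shows "good n A"
proof -
  have pi: "inv_into UNIV p permutes {0..<n}" using p by (rule permutes_inv)
  have "reidx (inv_into UNIV p) n (reidx p n A) = A"
    unfolding reidx_def using A p pi
    by (intro eq_matI) (auto simp: permutes_in_image permutes_inverses)
  moreover have "good n (reidx (inv_into UNIV p) n (reidx p n A))"
    by (rule good_reidx[OF _ g pi]) (auto simp: reidx_def)
  ultimately show ?thesis by simp
qed

lemma good_similar:
  fixes A :: "'a::field mat"
  assumes A: "A \<in> carrier_mat n n" and P: "P \<in> carrier_mat n n" and Q: "Q \<in> carrier_mat n n"
    and PQ: "P * Q = 1\<^sub>m n" and g: "good n A"
  shows "good n (P * A * Q)"
proof -
  obtain B where B: "B \<in> carrier_mat n n" "det B \<noteq> 0" "det (B - 1\<^sub>m n) \<noteq> 0" "det (A - B) \<noteq> 0"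
    using g unfolding good_def by blast
  have dPQ: "det P * det Q = 1" using det_mult[OF P Q] PQ by simp
  have d: "\<And>M. M \<in> carrier_mat n n \<Longrightarrow> det (P * M * Q) = det M"
  proof -
    fix M :: "'a mat" assume M: "M \<in> carrier_mat n n"
    have "det (P * M * Q) = det P * det M * det Q"
      using det_mult[OF mult_carrier_mat[OF P M] Q] det_mult[OF P M] P M by simp
    then show "det (P * M * Q) = det M" using dPQ by (simp add: algebra_simps)
  qed
  have e1: "P * B * Q - 1\<^sub>m n = P * (B - 1\<^sub>m n) * Q"
  proof -
    have "P * (B - 1\<^sub>m n) = P * B - P" using P B by (simp add: mult_minus_distrib_mat)
    then have "P * (B - 1\<^sub>m n) * Q = (P * B - P) * Q" by simp
    also have "\<dots> = P * B * Q - P * Q" by (rule minus_mult_distrib_mat) (use P B Q in auto)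
    finally show ?thesis using PQ by simp
  qed
  have e2: "P * A * Q - P * B * Q = P * (A - B) * Q"
  proof -
    have "P * (A - B) = P * A - P * B" using P A B by (simp add: mult_minus_distrib_mat)
    then have "P * (A - B) * Q = (P * A - P * B) * Q" by simp
    also have "\<dots> = P * A * Q - P * B * Q" by (rule minus_mult_distrib_mat) (use P A B Q in auto)
    finally show ?thesis by simp
  qed
  have c: "P * B * Q \<in> carrier_mat n n" using P B Q by auto
  have d1: "det (P * B * Q) = det B" by (rule d[OF B(1)])
  have d2: "det (P * B * Q - 1\<^sub>m n) = det (B - 1\<^sub>m n)" unfolding e1
    by (rule d) (use B in auto)
  have d3: "det (P * A * Q - P * B * Q) = det (A - B)" unfolding e2
    by (rule d) (use A B in auto)
  show ?thesis using B by (intro goodI[OF c]) (simp_all only: d1 d2 d3 not_False_eq_True)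
qed
lemma det1: assumes A: "A \<in> carrier_mat 1 1" shows "det A = A $$ (0,0)"
  by (rule det_single[OF A])

lemma det2: fixes A :: "'a::comm_ring_1 mat" assumes A: "A \<in> carrier_mat 2 2"
  shows "det A = A $$ (0,0) * A $$ (1,1) - A $$ (0,1) * A $$ (1,0)"
proof -
  have "det A = (\<Sum>j<2. A $$ (0,j) * cofactor A 0 j)" by (rule laplace_expansion_row[OF A]) simp
  moreover have "\<And>j. j < 2 \<Longrightarrow> det (mat_delete A 0 j) = A $$ (1, if j = 0 then 1 else 0)"
  proof -
    fix j :: nat assume j: "j < 2"
    have "mat_delete A 0 j \<in> carrier_mat 1 1" using mat_delete_carrier[OF A] by simp
    then have "det (mat_delete A 0 j) = mat_delete A 0 j $$ (0,0)" by (rule det_single)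
    then show "det (mat_delete A 0 j) = A $$ (1, if j = 0 then 1 else 0)"
      using A j unfolding mat_delete_def by auto
  qed
  ultimately show ?thesis unfolding cofactor_def by (simp add: numeral_2_eq_2)
qed

lemma det3: fixes A :: "'a::comm_ring_1 mat" assumes A: "A \<in> carrier_mat 3 3"
  shows "det A = A $$ (0,0) * (A $$ (1,1) * A $$ (2,2) - A $$ (1,2) * A $$ (2,1))
     - A $$ (0,1) * (A $$ (1,0) * A $$ (2,2) - A $$ (1,2) * A $$ (2,0))
     + A $$ (0,2) * (A $$ (1,0) * A $$ (2,1) - A $$ (1,1) * A $$ (2,0))"
proof -
  have "det A = (\<Sum>j<3. A $$ (0,j) * cofactor A 0 j)" by (rule laplace_expansion_row[OF A]) simp
  moreover have "\<And>j. j < 3 \<Longrightarrow> det (mat_delete A 0 j) = 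
     A $$ (1, if j = 0 then 1 else 0) * A $$ (2, if j = 2 then 1 else 2) - A $$ (1, if j = 2 then 1 else 2) * A $$ (2, if j = 0 then 1 else 0)"
  proof -
    fix j :: nat assume j: "j < 3"
    have "mat_delete A 0 j \<in> carrier_mat 2 2" using mat_delete_carrier[OF A] by simp
    then have "det (mat_delete A 0 j) = mat_delete A 0 j $$ (0,0) * mat_delete A 0 j $$ (1,1) - mat_delete A 0 j $$ (0,1) * mat_delete A 0 j $$ (1,0)" by (rule det2)
    then show "det (mat_delete A 0 j) = A $$ (1, if j = 0 then 1 else 0) * A $$ (2, if j = 2 then 1 else 2) - A $$ (1, if j = 2 then 1 else 2) * A $$ (2, if j = 0 then 1 else 0)"
      using A j unfolding mat_delete_def by (auto simp: numeral_2_eq_2 numeral_3_eq_3 less_Suc_eq)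
  qed
  ultimately show ?thesis unfolding cofactor_def by (simp add: numeral_3_eq_3 numeral_2_eq_2 algebra_simps)
qed
lemma vm_diff: fixes v :: "'a::ring_1^'n" 
  shows "v v* (B - C) = v v* B - v v* C"
  by (rule Finite_Cartesian_Product.vec_eq_iff[THEN iffD2]) (simp add: vector_matrix_mult_def sum_subtractf right_diff_distrib)

lemma mm_diff: fixes M :: "'a::ring_1^'n^'m"
  shows "M ** (P - Q) = M ** P - M ** Q"
  by (intro Finite_Cartesian_Product.vec_eq_iff[THEN iffD2] allI)
    (simp add: matrix_matrix_mult_def sum_subtractf right_diff_distrib)

lemma vm_zero: "(0::'a::ring_1^'n) v* K = 0"
  by (rule Finite_Cartesian_Product.vec_eq_iff[THEN iffD2]) (simp add: vector_matrix_mult_def)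

lemma fpf_of_inv:
  fixes M :: "'a::field^'n^'n"
  assumes "invertible (M - Finite_Cartesian_Product.mat 1)"
  shows "fixed_point_free M"
  unfolding fixed_point_free_def
proof (intro allI impI)
  fix v :: "'a^'n" assume v: "v v* M = v"
  obtain K where K: "(M - Finite_Cartesian_Product.mat 1) ** K = Finite_Cartesian_Product.mat 1"
    using assms invertible_right_inverse by blast
  have "v v* (M - Finite_Cartesian_Product.mat 1) = 0" using v by (simp add: vm_diff)
  then have "v v* ((M - Finite_Cartesian_Product.mat 1) ** K) = 0"
    by (simp add: vector_matrix_mul_assoc[symmetric] vm_zero)
  then show "v = 0" using K by simp
qed

lemma inv_exists:
  fixes M :: "'a::field mat"
  assumes M: "M \<in> carrier_mat n n" and d: "det M \<noteq> 0"
  shows "\<exists>M' \<in> carrier_mat n n. M * M' = 1\<^sub>m n"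
proof -
  note a = adj_mat[OF M]
  define M' where "M' = (1 / det M) \<cdot>\<^sub>m adj_mat M"
  have "M * M' = (1 / det M) \<cdot>\<^sub>m (M * adj_mat M)"
    unfolding M'_def by (rule mult_smult_distrib[OF M a(1)])
  also have "\<dots> = 1\<^sub>m n" unfolding a(2) using d by (intro eq_matI) auto
  finally show ?thesis using a(1) unfolding M'_def by auto
qed

context
  fixes h :: "'n::finite \<Rightarrow> nat"
  assumes h: "bij_betw h UNIV {0..<CARD('n)}"
begin

definition fr :: "'a mat \<Rightarrow> 'a^'n^'n" where
  "fr M = (\<chi> i j. M $$ (h i, h j))"

definition tom :: "'a^'n^'n \<Rightarrow> 'a mat" where
  "tom A = Matrix.mat CARD('n) CARD('n) (\<lambda>(i,j). A $ (inv_into UNIV h i) $ (inv_into UNIV h j))"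

lemma h_lt: "h i < CARD('n)" using h by (auto simp: bij_betw_def)
lemma h_inv: "inv_into UNIV h (h i) = i" using h by (auto simp: bij_betw_def)

lemma fr_tom: "fr (tom A) = A"
  unfolding fr_def tom_def by (simp add: Finite_Cartesian_Product.vec_eq_iff h_lt h_inv)

lemma tom_carrier: "tom A \<in> carrier_mat CARD('n) CARD('n)" unfolding tom_def by simp

lemma fr_mult:
  fixes M N :: "'a::semiring_1 mat"
  assumes M: "M \<in> carrier_mat CARD('n) CARD('n)" and N: "N \<in> carrier_mat CARD('n) CARD('n)"
  shows "fr (M * N) = fr M ** fr N"
proof -
  have "\<And>i j. (\<Sum>k\<in>{0..<CARD('n)}. M $$ (h i, k) * N $$ (k, h j)) = (\<Sum>k\<in>UNIV. M $$ (h i, h k) * N $$ (h k, h j))"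
    by (rule sum.reindex_bij_betw[OF h, symmetric])
  then show ?thesis using M N
    by (simp add: fr_def matrix_matrix_mult_def Finite_Cartesian_Product.vec_eq_iff h_lt scalar_prod_def atLeast0LessThan)
qed

lemma fr_one: "fr (1\<^sub>m CARD('n)) = (Finite_Cartesian_Product.mat 1 :: 'a::{zero,one}^'n^'n)"
proof -
  have inj: "\<And>i j. h i = h j \<longleftrightarrow> i = j" using h by (auto simp: bij_betw_def inj_on_def)
  show ?thesis by (simp add: fr_def Finite_Cartesian_Product.mat_def Finite_Cartesian_Product.vec_eq_iff h_lt inj)
qed

lemma fr_minus:
  fixes M N :: "'a::ab_group_add mat"
  assumes M: "M \<in> carrier_mat CARD('n) CARD('n)" and N: "N \<in> carrier_mat CARD('n) CARD('n)"
  shows "fr (M - N) = fr M - fr N"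
  using M N by (intro Finite_Cartesian_Product.vec_eq_iff[THEN iffD2] allI) (simp add: fr_def h_lt)

lemma fr_invertible:
  fixes M :: "'a::field mat"
  assumes M: "M \<in> carrier_mat CARD('n) CARD('n)" and d: "det M \<noteq> 0"
  shows "invertible (fr M)"
proof -
  obtain M' where M': "M' \<in> carrier_mat CARD('n) CARD('n)" "M * M' = 1\<^sub>m CARD('n)"
    using inv_exists[OF M d] by blast
  have "fr M ** fr M' = fr (M * M')" by (rule fr_mult[OF M M'(1), symmetric])
  also have "\<dots> = Finite_Cartesian_Product.mat 1" using M'(2) fr_one by simp
  finally have "fr M ** fr M' = Finite_Cartesian_Product.mat 1" .
  then show ?thesis using invertible_right_inverse by blast
qed

end


lemma good0: "good 0 (A::'a::field mat)"
proof -
  have "det (A - 1\<^sub>m 0) = 1" by (rule det_dim_zero) (rule minus_carrier_mat, simp)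
  moreover have "det (1\<^sub>m 0 - 1\<^sub>m 0 :: 'a mat) = 1" by (rule det_dim_zero) (rule minus_carrier_mat, simp)
  ultimately show ?thesis unfolding good_def by (intro bexI[of _ "1\<^sub>m 0"]) auto
qed

lemma split_carriers:
  assumes A: "A \<in> carrier_mat (k+m) (k+m)" and sb: "split_block A k k = (G,R,S,H)"
  shows "G \<in> carrier_mat k k" "R \<in> carrier_mat k m" "S \<in> carrier_mat m k" "H \<in> carrier_mat m m"
    "A = four_block_mat G R S H"
proof -
  have dA: "dim_row A = k + m" "dim_col A = k + m" using A by auto
  note sp = split_block[OF sb dA]
  show "G \<in> carrier_mat k k" "R \<in> carrier_mat k m" "S \<in> carrier_mat m k" "H \<in> carrier_mat m m"
    "A = four_block_mat G R S H" using sp by auto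
qed

lemma block:
  fixes A :: "'a::field mat"
  assumes A: "A \<in> carrier_mat (k+m) (k+m)" and sb: "split_block A k k = (G,R,S,H)"
    and gG: "good k G" and gH: "good m H"
  shows "good (k+m) A"
proof -
  note c = split_carriers[OF A sb]
  obtain X1 where X1: "X1 \<in> carrier_mat k k" "det X1 \<noteq> 0" "det (X1 - 1\<^sub>m k) \<noteq> 0" "det (G - X1) \<noteq> 0"
    using gG unfolding good_def by blast
  obtain X2 where X2: "X2 \<in> carrier_mat m m" "det X2 \<noteq> 0" "det (X2 - 1\<^sub>m m) \<noteq> 0" "det (H - X2) \<noteq> 0"
    using gH unfolding good_def by blast
  have "R * 0\<^sub>m m k = 0\<^sub>m k k" by (rule right_mult_zero_mat[OF c(2)])
  then have "G - X1 - R * 0\<^sub>m m k = G - X1" using c(1) X1(1) by (intro eq_matI) auto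
  then have "det (G - X1 - R * 0\<^sub>m m k) \<noteq> 0" using X1(4) by simp
  then show ?thesis
    by (rule step[OF A sb X1(1-3) X2 zero_carrier_mat])
qed

lemma step1:
  fixes A :: "'a::field mat"
  assumes A: "A \<in> carrier_mat (1+m) (1+m)" and sb: "split_block A 1 1 = (G,R,S,H)"
    and x: "x \<noteq> 0" "x \<noteq> 1" and gH: "good m H" and W: "W \<in> carrier_mat m 1"
    and ne: "G $$ (0,0) - x - (R * W) $$ (0,0) \<noteq> 0"
  shows "good (1+m) A"
proof -
  note c = split_carriers[OF A sb]
  obtain X2 where X2: "X2 \<in> carrier_mat m m" "det X2 \<noteq> 0" "det (X2 - 1\<^sub>m m) \<noteq> 0" "det (H - X2) \<noteq> 0"
    using gH unfolding good_def by blast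
  define X1 :: "'a mat" where "X1 = Matrix.mat 1 1 (\<lambda>_. x)"
  have X1: "X1 \<in> carrier_mat 1 1" unfolding X1_def by simp
  have "det X1 = X1 $$ (0,0)" by (rule det1[OF X1])
  then have "det X1 = x" by (simp add: X1_def)
  then have d1: "det X1 \<noteq> 0" using x by simp
  have "det (X1 - 1\<^sub>m 1) = x - 1" by (subst det1) (auto simp: X1_def)
  then have d2: "det (X1 - 1\<^sub>m 1) \<noteq> 0" using x by simp
  have RW: "R * W \<in> carrier_mat 1 1" using c(2) W by auto
  have "det (G - X1 - R * W) = G $$ (0,0) - x - (R * W) $$ (0,0)"
  proof -
    have dRW: "dim_row (R * W) = 1" "dim_col (R * W) = 1" using RW by auto
    have "G - X1 - R * W \<in> carrier_mat 1 1" by (rule minus_carrier_mat[OF RW])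
    then show ?thesis by (subst det1) (use c(1) dRW in \<open>auto simp: X1_def\<close>)
  qed
  then have "det (G - X1 - R * W) \<noteq> 0" using ne by simp
  then show ?thesis by (rule step[OF A sb X1 d1 d2 X2 W])
qed

lemma good_big:
  fixes A :: "'a::field mat"
  assumes big: "\<And>a::'a. \<exists>x. x \<noteq> 0 \<and> x \<noteq> 1 \<and> x \<noteq> a"
  shows "A \<in> carrier_mat n n \<Longrightarrow> good n A"
proof (induction n arbitrary: A)
  case 0 show ?case by (rule good0)
next
  case (Suc m)
  have A: "A \<in> carrier_mat (1+m) (1+m)" using Suc.prems by simp
  obtain G R S H where sb: "split_block A 1 1 = (G,R,S,H)" by (cases "split_block A 1 1") auto
  note c = split_carriers[OF A sb]
  have gH: "good m H" by (rule Suc.IH[OF c(4)])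
  obtain x where x: "x \<noteq> 0" "x \<noteq> 1" "x \<noteq> G $$ (0,0)" using big by blast
  have "R * 0\<^sub>m m 1 = 0\<^sub>m 1 1" by (rule right_mult_zero_mat[OF c(2)])
  then have "G $$ (0,0) - x - (R * 0\<^sub>m m 1) $$ (0,0) \<noteq> 0" using x by simp
  then have "good (1+m) A" by (rule step1[OF A sb x(1,2) gH zero_carrier_mat])
  then show ?case by simp
qed


lemma card_ge2: "CARD('a::{field,finite}) \<ge> 2"
proof -
  have "card {0::'a, 1} = 2" by simp
  moreover have "card {0::'a, 1} \<le> CARD('a)" by (rule card_mono) auto
  ultimately show ?thesis by simp
qed

lemma big_field:
  assumes "CARD('a::{field,finite}) \<ge> 4"
  shows "\<exists>x::'a. x \<noteq> 0 \<and> x \<noteq> 1 \<and> x \<noteq> a"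
proof (rule ccontr)
  assume "\<not> ?thesis"
  then have "UNIV \<subseteq> {0, 1, a}" by auto
  then have "CARD('a) \<le> card {0::'a, 1, a}" by (rule card_mono[rotated]) auto
  also have "\<dots> \<le> 3" by (auto simp: card_insert_if)
  finally show False using assms by simp
qed

lemma F2_univ:
  assumes "CARD('a::{field,finite}) = 2"
  shows "(x::'a) = 0 \<or> x = 1"
proof -
  have "{0::'a, 1} = UNIV"
    by (rule card_subset_eq) (use assms in auto)
  then show ?thesis by auto
qed

lemma F2_two:
  assumes "CARD('a::{field,finite}) = 2"
  shows "(1::'a) + 1 = 0"
  using F2_univ[OF assms, of "1 + 1"] by (metis add_cancel_left_right one_neq_zero)

lemma F2_ch:
  assumes "CARD('a::{field,finite}) = 2"
  shows "(of_int z :: 'a) = 0 \<longleftrightarrow> 2 dvd z"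
proof -
  have t: "(of_int 2 :: 'a) = 0" using F2_two[OF assms] by simp
  have "z = 2 * (z div 2) + z mod 2" by simp
  then have "(of_int z :: 'a) = of_int 2 * of_int (z div 2) + of_int (z mod 2)"
    by (metis of_int_add of_int_mult)
  then have e: "(of_int z :: 'a) = of_int (z mod 2)" using t by simp
  have "z mod 2 = 0 \<or> z mod 2 = 1" by auto
  then show ?thesis unfolding e by (auto simp: dvd_eq_mod_eq_0)
qed

lemma F2_ent:
  assumes "CARD('a::{field,finite}) = 2"
  shows "\<exists>z::int. z \<in> {0,1} \<and> (x::'a) = of_int z"
  using F2_univ[OF assms, of x] by (auto intro: exI[of _ 0] exI[of _ 1])

lemma F3_facts:
  assumes c: "CARD('a::{field,finite}) = 3"
  shows "(-1::'a) \<noteq> 1" "(1::'a) + 1 = -1" "(x::'a) = 0 \<or> x = 1 \<or> x = -1"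
proof -
  show ne: "(-1::'a) \<noteq> 1"
  proof
    assume m: "(-1::'a) = 1"
    have "\<not> UNIV \<subseteq> {0::'a, 1}"
    proof
      assume "UNIV \<subseteq> {0::'a, 1}"
      then have "CARD('a) \<le> card {0::'a,1}" by (rule card_mono[rotated]) auto
      then show False using c by simp
    qed
    then obtain y :: 'a where y: "y \<noteq> 0" "y \<noteq> 1" by auto
    have y1: "y + 1 \<noteq> 0" using y m by (metis add_eq_0_iff minus_equation_iff)
    have y2: "y + 1 \<noteq> 1" using y by simp
    have y3: "y + 1 \<noteq> y" by simp
    have "card {0::'a, 1, y, y + 1} = 4" using y y1 y2 y3 by auto
    moreover have "card {0::'a, 1, y, y + 1} \<le> CARD('a)" by (rule card_mono) auto
    ultimately show False using c by simp
  qed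
  have "{0::'a, 1, -1} = UNIV"
    by (rule card_subset_eq) (use c ne in \<open>auto simp: eq_neg_iff_add_eq_0\<close>)
  then show "(x::'a) = 0 \<or> x = 1 \<or> x = -1" by auto
  have "(1::'a) + 1 \<noteq> 0" using ne by (metis add_eq_0_iff)
  moreover have "(1::'a) + 1 \<noteq> 1" by (metis add_cancel_left_right one_neq_zero)
  ultimately show "(1::'a) + 1 = -1" using \<open>{0::'a, 1, -1} = UNIV\<close> by auto
qed

lemma F3_ch:
  assumes c: "CARD('a::{field,finite}) = 3"
  shows "(of_int z :: 'a) = 0 \<longleftrightarrow> 3 dvd z"
proof -
  note f = F3_facts[OF c]
  have t: "(of_int 3 :: 'a) = 0"
  proof -
    have "(of_int 3 :: 'a) = (1 + 1) + 1" by simp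
    also have "\<dots> = 0" using f(2) by simp
    finally show ?thesis .
  qed
  have t2: "(of_int 2 :: 'a) \<noteq> 0"
  proof -
    have "(of_int 2 :: 'a) = 1 + 1" by simp
    also have "\<dots> = -1" by (rule f(2))
    finally have "(of_int 2 :: 'a) = -1" .
    then show ?thesis by (metis neg_equal_0_iff_equal one_neq_zero)
  qed
  have "z = 3 * (z div 3) + z mod 3" by simp
  then have "(of_int z :: 'a) = of_int 3 * of_int (z div 3) + of_int (z mod 3)"
    by (metis of_int_add of_int_mult)
  then have e: "(of_int z :: 'a) = of_int (z mod 3)" using t by simp
  have "z mod 3 = 0 \<or> z mod 3 = 1 \<or> z mod 3 = 2" by auto
  then show ?thesis
  proof (elim disjE)
    assume "z mod 3 = 2" then show ?thesis unfolding e using t2 by (simp add: dvd_eq_mod_eq_0)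
  qed (auto simp: e dvd_eq_mod_eq_0)
qed

lemma F3_ent:
  assumes "CARD('a::{field,finite}) = 3"
  shows "\<exists>z::int. z \<in> {-1,0,1} \<and> (x::'a) = of_int z"
  using F3_facts(3)[OF assms, of x] by (auto intro: exI[of _ 0] exI[of _ 1] exI[of _ "-1"])

lemma brute_F3_2:
  fixes A :: "'a::field mat"
  assumes A: "A \<in> carrier_mat 2 2"
    and ent: "\<And>i j. i < 2 \<Longrightarrow> j < 2 \<Longrightarrow> \<exists>z::int. z \<in> {-1, 0, 1} \<and> A $$ (i,j) = of_int z"
    and ch: "\<And>z::int. (of_int z :: 'a) = 0 \<longleftrightarrow> 3 dvd z"
  shows "good 2 A"
proof -
  obtain z00 :: int where z00: "z00 \<in> {-1, 0, 1}" "A $$ (0,0) = of_int z00" using ent[of 0 0] by auto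
  obtain z01 :: int where z01: "z01 \<in> {-1, 0, 1}" "A $$ (0,1) = of_int z01" using ent[of 0 1] by auto
  obtain z10 :: int where z10: "z10 \<in> {-1, 0, 1}" "A $$ (1,0) = of_int z10" using ent[of 1 0] by auto
  obtain z11 :: int where z11: "z11 \<in> {-1, 0, 1}" "A $$ (1,1) = of_int z11" using ent[of 1 1] by auto
  have key: "\<not> 3 dvd ((z00 - (0)) * (z11 - (1)) - (z01 - (1)) * (z10 - (1))) \<or> \<not> 3 dvd ((z00 - (0)) * (z11 - (1)) - (z01 - (-1)) * (z10 - (-1))) \<or> \<not> 3 dvd ((z00 - (1)) * (z11 - (0)) - (z01 - (1)) * (z10 - (-1))) \<or> \<not> 3 dvd ((z00 - (1)) * (z11 - (0)) - (z01 - (-1)) * (z10 - (1)))"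
    using z00(1) z01(1) z10(1) z11(1) by (simp only: insert_iff empty_iff simp_thms) (elim disjE; simp)
  have dA: "dim_row A = 2" "dim_col A = 2" using A by auto
  define W0 :: "'a mat" where "W0 = Matrix.mat 2 2 (\<lambda>(i,j). of_int ([[0, 1], [1, 1]] ! i ! j))"
  have c0: "W0 \<in> carrier_mat 2 2" unfolding W0_def by simp
  have d0a: "det W0 \<noteq> 0"
  proof -
    have "det W0 = of_int ((0) * (1) - (1) * (1))" by (subst det2[OF c0]) (simp add: W0_def)
    then show ?thesis using ch by simp
  qed
  have d0b: "det (W0 - 1\<^sub>m 2) \<noteq> 0"
  proof -
    have m: "W0 - 1\<^sub>m 2 \<in> carrier_mat 2 2" by (rule minus_carrier_mat) simp
    have "det (W0 - 1\<^sub>m 2) = of_int ((0 - (1)) * (1 - (1)) - (1 - (0)) * (1 - (0)))" by (subst det2[OF m]) (simp add: W0_def)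
    then show ?thesis using ch by simp
  qed
  have e0: "det (A - W0) = of_int ((z00 - (0)) * (z11 - (1)) - (z01 - (1)) * (z10 - (1)))"
  proof -
    have m: "A - W0 \<in> carrier_mat 2 2" by (rule minus_carrier_mat[OF c0])
    show ?thesis by (subst det2[OF m]) (simp add: W0_def z00(2) z00(2)[simplified] z01(2) z01(2)[simplified] z10(2) z10(2)[simplified] z11(2) z11(2)[simplified])
  qed
  define W1 :: "'a mat" where "W1 = Matrix.mat 2 2 (\<lambda>(i,j). of_int ([[0, -1], [-1, 1]] ! i ! j))"
  have c1: "W1 \<in> carrier_mat 2 2" unfolding W1_def by simp
  have d1a: "det W1 \<noteq> 0"
  proof -
    have "det W1 = of_int ((0) * (1) - (-1) * (-1))" by (subst det2[OF c1]) (simp add: W1_def)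
    then show ?thesis using ch by simp
  qed
  have d1b: "det (W1 - 1\<^sub>m 2) \<noteq> 0"
  proof -
    have m: "W1 - 1\<^sub>m 2 \<in> carrier_mat 2 2" by (rule minus_carrier_mat) simp
    have "det (W1 - 1\<^sub>m 2) = of_int ((0 - (1)) * (1 - (1)) - (-1 - (0)) * (-1 - (0)))" by (subst det2[OF m]) (simp add: W1_def)
    then show ?thesis using ch by simp
  qed
  have e1: "det (A - W1) = of_int ((z00 - (0)) * (z11 - (1)) - (z01 - (-1)) * (z10 - (-1)))"
  proof -
    have m: "A - W1 \<in> carrier_mat 2 2" by (rule minus_carrier_mat[OF c1])
    show ?thesis by (subst det2[OF m]) (simp add: W1_def z00(2) z00(2)[simplified] z01(2) z01(2)[simplified] z10(2) z10(2)[simplified] z11(2) z11(2)[simplified])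
  qed
  define W2 :: "'a mat" where "W2 = Matrix.mat 2 2 (\<lambda>(i,j). of_int ([[1, 1], [-1, 0]] ! i ! j))"
  have c2: "W2 \<in> carrier_mat 2 2" unfolding W2_def by simp
  have d2a: "det W2 \<noteq> 0"
  proof -
    have "det W2 = of_int ((1) * (0) - (1) * (-1))" by (subst det2[OF c2]) (simp add: W2_def)
    then show ?thesis using ch by simp
  qed
  have d2b: "det (W2 - 1\<^sub>m 2) \<noteq> 0"
  proof -
    have m: "W2 - 1\<^sub>m 2 \<in> carrier_mat 2 2" by (rule minus_carrier_mat) simp
    have "det (W2 - 1\<^sub>m 2) = of_int ((1 - (1)) * (0 - (1)) - (1 - (0)) * (-1 - (0)))" by (subst det2[OF m]) (simp add: W2_def)
    then show ?thesis using ch by simp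
  qed
  have e2: "det (A - W2) = of_int ((z00 - (1)) * (z11 - (0)) - (z01 - (1)) * (z10 - (-1)))"
  proof -
    have m: "A - W2 \<in> carrier_mat 2 2" by (rule minus_carrier_mat[OF c2])
    show ?thesis by (subst det2[OF m]) (simp add: W2_def z00(2) z00(2)[simplified] z01(2) z01(2)[simplified] z10(2) z10(2)[simplified] z11(2) z11(2)[simplified])
  qed
  define W3 :: "'a mat" where "W3 = Matrix.mat 2 2 (\<lambda>(i,j). of_int ([[1, -1], [1, 0]] ! i ! j))"
  have c3: "W3 \<in> carrier_mat 2 2" unfolding W3_def by simp
  have d3a: "det W3 \<noteq> 0"
  proof -
    have "det W3 = of_int ((1) * (0) - (-1) * (1))" by (subst det2[OF c3]) (simp add: W3_def)
    then show ?thesis using ch by simp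
  qed
  have d3b: "det (W3 - 1\<^sub>m 2) \<noteq> 0"
  proof -
    have m: "W3 - 1\<^sub>m 2 \<in> carrier_mat 2 2" by (rule minus_carrier_mat) simp
    have "det (W3 - 1\<^sub>m 2) = of_int ((1 - (1)) * (0 - (1)) - (-1 - (0)) * (1 - (0)))" by (subst det2[OF m]) (simp add: W3_def)
    then show ?thesis using ch by simp
  qed
  have e3: "det (A - W3) = of_int ((z00 - (1)) * (z11 - (0)) - (z01 - (-1)) * (z10 - (1)))"
  proof -
    have m: "A - W3 \<in> carrier_mat 2 2" by (rule minus_carrier_mat[OF c3])
    show ?thesis by (subst det2[OF m]) (simp add: W3_def z00(2) z00(2)[simplified] z01(2) z01(2)[simplified] z10(2) z10(2)[simplified] z11(2) z11(2)[simplified])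
  qed
  show ?thesis
  proof -
    from key show ?thesis
    proof (elim disjE)
      assume "\<not> 3 dvd ((z00 - (0)) * (z11 - (1)) - (z01 - (1)) * (z10 - (1)))"
      then have "det (A - W0) \<noteq> 0" by (simp only: e0 ch not_False_eq_True)
      then show ?thesis by (rule goodI[OF c0 d0a d0b])
    next
      assume "\<not> 3 dvd ((z00 - (0)) * (z11 - (1)) - (z01 - (-1)) * (z10 - (-1)))"
      then have "det (A - W1) \<noteq> 0" by (simp only: e1 ch not_False_eq_True)
      then show ?thesis by (rule goodI[OF c1 d1a d1b])
    next
      assume "\<not> 3 dvd ((z00 - (1)) * (z11 - (0)) - (z01 - (1)) * (z10 - (-1)))"
      then have "det (A - W2) \<noteq> 0" by (simp only: e2 ch not_False_eq_True)
      then show ?thesis by (rule goodI[OF c2 d2a d2b])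
    next
      assume "\<not> 3 dvd ((z00 - (1)) * (z11 - (0)) - (z01 - (-1)) * (z10 - (1)))"
      then have "det (A - W3) \<noteq> 0" by (simp only: e3 ch not_False_eq_True)
      then show ?thesis by (rule goodI[OF c3 d3a d3b])
    qed
  qed
qed

lemma brute_F2_3:
  fixes A :: "'a::field mat"
  assumes A: "A \<in> carrier_mat 3 3"
    and ent: "\<And>i j. i < 3 \<Longrightarrow> j < 3 \<Longrightarrow> \<exists>z::int. z \<in> {0, 1} \<and> A $$ (i,j) = of_int z"
    and ch: "\<And>z::int. (of_int z :: 'a) = 0 \<longleftrightarrow> 2 dvd z"
  shows "good 3 A"
proof -
  obtain z00 :: int where z00: "z00 \<in> {0, 1}" "A $$ (0,0) = of_int z00" using ent[of 0 0] by auto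
  obtain z01 :: int where z01: "z01 \<in> {0, 1}" "A $$ (0,1) = of_int z01" using ent[of 0 1] by auto
  obtain z02 :: int where z02: "z02 \<in> {0, 1}" "A $$ (0,2) = of_int z02" using ent[of 0 2] by auto
  obtain z10 :: int where z10: "z10 \<in> {0, 1}" "A $$ (1,0) = of_int z10" using ent[of 1 0] by auto
  obtain z11 :: int where z11: "z11 \<in> {0, 1}" "A $$ (1,1) = of_int z11" using ent[of 1 1] by auto
  obtain z12 :: int where z12: "z12 \<in> {0, 1}" "A $$ (1,2) = of_int z12" using ent[of 1 2] by auto
  obtain z20 :: int where z20: "z20 \<in> {0, 1}" "A $$ (2,0) = of_int z20" using ent[of 2 0] by auto
  obtain z21 :: int where z21: "z21 \<in> {0, 1}" "A $$ (2,1) = of_int z21" using ent[of 2 1] by auto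
  obtain z22 :: int where z22: "z22 \<in> {0, 1}" "A $$ (2,2) = of_int z22" using ent[of 2 2] by auto
  have key: "\<not> 2 dvd ((z00 - (0)) * ((z11 - (1)) * (z22 - (0)) - (z12 - (1)) * (z21 - (1))) - (z01 - (0)) * ((z10 - (0)) * (z22 - (0)) - (z12 - (1)) * (z20 - (1))) + (z02 - (1)) * ((z10 - (0)) * (z21 - (1)) - (z11 - (1)) * (z20 - (1)))) \<or> \<not> 2 dvd ((z00 - (0)) * ((z11 - (0)) * (z22 - (0)) - (z12 - (1)) * (z21 - (0))) - (z01 - (1)) * ((z10 - (1)) * (z22 - (0)) - (z12 - (1)) * (z20 - (1))) + (z02 - (0)) * ((z10 - (1)) * (z21 - (0)) - (z11 - (0)) * (z20 - (1)))) \<or> \<not> 2 dvd ((z00 - (0)) * ((z11 - (1)) * (z22 - (0)) - (z12 - (1)) * (z21 - (1))) - (z01 - (1)) * ((z10 - (1)) * (z22 - (0)) - (z12 - (1)) * (z20 - (0))) + (z02 - (1)) * ((z10 - (1)) * (z21 - (1)) - (z11 - (1)) * (z20 - (0)))) \<or> \<not> 2 dvd ((z00 - (1)) * ((z11 - (0)) * (z22 - (1)) - (z12 - (0)) * (z21 - (1))) - (z01 - (0)) * ((z10 - (1)) * (z22 - (1)) - (z12 - (0)) * (z20 - (0))) + (z02 - (1)) * ((z10 - (1)) * (z21 - (1)) - (z11 - (0)) * (z20 - (0)))) \<or> \<not> 2 dvd ((z00 - (0)) * ((z11 - (0)) * (z22 - (1)) - (z12 - (0)) * (z21 - (1))) -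 (z01 - (0)) * ((z10 - (1)) * (z22 - (1)) - (z12 - (0)) * (z20 - (0))) + (z02 - (1)) * ((z10 - (1)) * (z21 - (1)) - (z11 - (0)) * (z20 - (0)))) \<or> \<not> 2 dvd ((z00 - (0)) * ((z11 - (1)) * (z22 - (0)) - (z12 - (1)) * (z21 - (1))) - (z01 - (1)) * ((z10 - (1)) * (z22 - (0)) - (z12 - (1)) * (z20 - (1))) + (z02 - (0)) * ((z10 - (1)) * (z21 - (1)) - (z11 - (1)) * (z20 - (1)))) \<or> \<not> 2 dvd ((z00 - (0)) * ((z11 - (0)) * (z22 - (0)) - (z12 - (1)) * (z21 - (1))) - (z01 - (1)) * ((z10 - (0)) * (z22 - (0)) - (z12 - (1)) * (z20 - (1))) + (z02 - (0)) * ((z10 - (0)) * (z21 - (1)) - (z11 - (0)) * (z20 - (1)))) \<or> \<not> 2 dvd ((z00 - (1)) * ((z11 - (1)) * (z22 - (1)) - (z12 - (0)) * (z21 - (1))) - (z01 - (0)) * ((z10 - (1)) * (z22 - (1)) - (z12 - (0)) * (z20 - (1))) + (z02 - (1)) * ((z10 - (1)) * (z21 - (1)) - (z11 - (1)) * (z20 - (1)))) \<or> \<not> 2 dvd ((z00 - (0)) * ((z11 - (1)) * (z22 - (1)) - (z12 - (1)) * (z21 - (1))) - (z01 - (0)) * ((z10 - (0)) * (z22 - (1)) - (z12 - (1)) * (z20 - (1))) + (z02 - (1)) * ((z10 - (0)) * (z21 - (1)) - (z11 - (1)) * (z20 - (1)))) \<or> \<not> 2 dvd ((z00 - (0)) *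 ((z11 - (0)) * (z22 - (0)) - (z12 - (0)) * (z21 - (1))) - (z01 - (0)) * ((z10 - (1)) * (z22 - (0)) - (z12 - (0)) * (z20 - (1))) + (z02 - (1)) * ((z10 - (1)) * (z21 - (1)) - (z11 - (0)) * (z20 - (1))))"
    using z00(1) z01(1) z02(1) z10(1) z11(1) z12(1) z20(1) z21(1) z22(1) by (simp only: insert_iff empty_iff simp_thms) (elim disjE; simp)
  have dA: "dim_row A = 3" "dim_col A = 3" using A by auto
  define W0 :: "'a mat" where "W0 = Matrix.mat 3 3 (\<lambda>(i,j). of_int ([[0, 0, 1], [0, 1, 1], [1, 1, 0]] ! i ! j))"
  have c0: "W0 \<in> carrier_mat 3 3" unfolding W0_def by simp
  have d0a: "det W0 \<noteq> 0"
  proof -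
    have "det W0 = of_int ((0) * ((1) * (0) - (1) * (1)) - (0) * ((0) * (0) - (1) * (1)) + (1) * ((0) * (1) - (1) * (1)))" by (subst det3[OF c0]) (simp add: W0_def)
    then show ?thesis using ch[of "(0) * ((1) * (0) - (1) * (1)) - (0) * ((0) * (0) - (1) * (1)) + (1) * ((0) * (1) - (1) * (1))"] by simp
  qed
  have d0b: "det (W0 - 1\<^sub>m 3) \<noteq> 0"
  proof -
    have m: "W0 - 1\<^sub>m 3 \<in> carrier_mat 3 3" by (rule minus_carrier_mat) simp
    have "det (W0 - 1\<^sub>m 3) = of_int ((0 - (1)) * ((1 - (1)) * (0 - (1)) - (1 - (0)) * (1 - (0))) - (0 - (0)) * ((0 - (0)) * (0 - (1)) - (1 - (0)) * (1 - (0))) + (1 - (0)) * ((0 - (0)) * (1 - (0)) - (1 - (1)) * (1 - (0))))" by (subst det3[OF m]) (simp add: W0_def)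
    then show ?thesis using ch[of "(0 - (1)) * ((1 - (1)) * (0 - (1)) - (1 - (0)) * (1 - (0))) - (0 - (0)) * ((0 - (0)) * (0 - (1)) - (1 - (0)) * (1 - (0))) + (1 - (0)) * ((0 - (0)) * (1 - (0)) - (1 - (1)) * (1 - (0)))"] by simp
  qed
  have e0: "det (A - W0) = of_int ((z00 - (0)) * ((z11 - (1)) * (z22 - (0)) - (z12 - (1)) * (z21 - (1))) - (z01 - (0)) * ((z10 - (0)) * (z22 - (0)) - (z12 - (1)) * (z20 - (1))) + (z02 - (1)) * ((z10 - (0)) * (z21 - (1)) - (z11 - (1)) * (z20 - (1))))"
  proof -
    have m: "A - W0 \<in> carrier_mat 3 3" by (rule minus_carrier_mat[OF c0])
    show ?thesis by (subst det3[OF m]) (simp add: W0_def z00(2) z00(2)[simplified] z01(2) z01(2)[simplified] z02(2) z02(2)[simplified] z10(2) z10(2)[simplified] z11(2) z11(2)[simplified] z12(2) z12(2)[simplified] z20(2) z20(2)[simplified] z21(2) z21(2)[simplified] z22(2) z22(2)[simplified])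
  qed
  define W1 :: "'a mat" where "W1 = Matrix.mat 3 3 (\<lambda>(i,j). of_int ([[0, 1, 0], [1, 0, 1], [1, 0, 0]] ! i ! j))"
  have c1: "W1 \<in> carrier_mat 3 3" unfolding W1_def by simp
  have d1a: "det W1 \<noteq> 0"
  proof -
    have "det W1 = of_int ((0) * ((0) * (0) - (1) * (0)) - (1) * ((1) * (0) - (1) * (1)) + (0) * ((1) * (0) - (0) * (1)))" by (subst det3[OF c1]) (simp add: W1_def)
    then show ?thesis using ch[of "(0) * ((0) * (0) - (1) * (0)) - (1) * ((1) * (0) - (1) * (1)) + (0) * ((1) * (0) - (0) * (1))"] by simp
  qed
  have d1b: "det (W1 - 1\<^sub>m 3) \<noteq> 0"
  proof -
    have m: "W1 - 1\<^sub>m 3 \<in> carrier_mat 3 3" by (rule minus_carrier_mat) simp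
    have "det (W1 - 1\<^sub>m 3) = of_int ((0 - (1)) * ((0 - (1)) * (0 - (1)) - (1 - (0)) * (0 - (0))) - (1 - (0)) * ((1 - (0)) * (0 - (1)) - (1 - (0)) * (1 - (0))) + (0 - (0)) * ((1 - (0)) * (0 - (0)) - (0 - (1)) * (1 - (0))))" by (subst det3[OF m]) (simp add: W1_def)
    then show ?thesis using ch[of "(0 - (1)) * ((0 - (1)) * (0 - (1)) - (1 - (0)) * (0 - (0))) - (1 - (0)) * ((1 - (0)) * (0 - (1)) - (1 - (0)) * (1 - (0))) + (0 - (0)) * ((1 - (0)) * (0 - (0)) - (0 - (1)) * (1 - (0)))"] by simp
  qed
  have e1: "det (A - W1) = of_int ((z00 - (0)) * ((z11 - (0)) * (z22 - (0)) - (z12 - (1)) * (z21 - (0))) - (z01 - (1)) * ((z10 - (1)) * (z22 - (0)) - (z12 - (1)) * (z20 - (1))) + (z02 - (0)) * ((z10 - (1)) * (z21 - (0)) - (z11 - (0)) * (z20 - (1))))"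
  proof -
    have m: "A - W1 \<in> carrier_mat 3 3" by (rule minus_carrier_mat[OF c1])
    show ?thesis by (subst det3[OF m]) (simp add: W1_def z00(2) z00(2)[simplified] z01(2) z01(2)[simplified] z02(2) z02(2)[simplified] z10(2) z10(2)[simplified] z11(2) z11(2)[simplified] z12(2) z12(2)[simplified] z20(2) z20(2)[simplified] z21(2) z21(2)[simplified] z22(2) z22(2)[simplified])
  qed
  define W2 :: "'a mat" where "W2 = Matrix.mat 3 3 (\<lambda>(i,j). of_int ([[0, 1, 1], [1, 1, 1], [0, 1, 0]] ! i ! j))"
  have c2: "W2 \<in> carrier_mat 3 3" unfolding W2_def by simp
  have d2a: "det W2 \<noteq> 0"
  proof -
    have "det W2 = of_int ((0) * ((1) * (0) - (1) * (1)) - (1) * ((1) * (0) - (1) * (0)) + (1) * ((1) * (1) - (1) * (0)))" by (subst det3[OF c2]) (simp add: W2_def)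
    then show ?thesis using ch[of "(0) * ((1) * (0) - (1) * (1)) - (1) * ((1) * (0) - (1) * (0)) + (1) * ((1) * (1) - (1) * (0))"] by simp
  qed
  have d2b: "det (W2 - 1\<^sub>m 3) \<noteq> 0"
  proof -
    have m: "W2 - 1\<^sub>m 3 \<in> carrier_mat 3 3" by (rule minus_carrier_mat) simp
    have "det (W2 - 1\<^sub>m 3) = of_int ((0 - (1)) * ((1 - (1)) * (0 - (1)) - (1 - (0)) * (1 - (0))) - (1 - (0)) * ((1 - (0)) * (0 - (1)) - (1 - (0)) * (0 - (0))) + (1 - (0)) * ((1 - (0)) * (1 - (0)) - (1 - (1)) * (0 - (0))))" by (subst det3[OF m]) (simp add: W2_def)
    then show ?thesis using ch[of "(0 - (1)) * ((1 - (1)) * (0 - (1)) - (1 - (0)) * (1 - (0))) - (1 - (0)) * ((1 - (0)) * (0 - (1)) - (1 - (0)) * (0 - (0))) + (1 - (0)) * ((1 - (0)) * (1 - (0)) - (1 - (1)) * (0 - (0)))"] by simp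
  qed
  have e2: "det (A - W2) = of_int ((z00 - (0)) * ((z11 - (1)) * (z22 - (0)) - (z12 - (1)) * (z21 - (1))) - (z01 - (1)) * ((z10 - (1)) * (z22 - (0)) - (z12 - (1)) * (z20 - (0))) + (z02 - (1)) * ((z10 - (1)) * (z21 - (1)) - (z11 - (1)) * (z20 - (0))))"
  proof -
    have m: "A - W2 \<in> carrier_mat 3 3" by (rule minus_carrier_mat[OF c2])
    show ?thesis by (subst det3[OF m]) (simp add: W2_def z00(2) z00(2)[simplified] z01(2) z01(2)[simplified] z02(2) z02(2)[simplified] z10(2) z10(2)[simplified] z11(2) z11(2)[simplified] z12(2) z12(2)[simplified] z20(2) z20(2)[simplified] z21(2) z21(2)[simplified] z22(2) z22(2)[simplified])
  qed
  define W3 :: "'a mat" where "W3 = Matrix.mat 3 3 (\<lambda>(i,j). of_int ([[1, 0, 1], [1, 0, 0], [0, 1, 1]] ! i ! j))"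
  have c3: "W3 \<in> carrier_mat 3 3" unfolding W3_def by simp
  have d3a: "det W3 \<noteq> 0"
  proof -
    have "det W3 = of_int ((1) * ((0) * (1) - (0) * (1)) - (0) * ((1) * (1) - (0) * (0)) + (1) * ((1) * (1) - (0) * (0)))" by (subst det3[OF c3]) (simp add: W3_def)
    then show ?thesis using ch[of "(1) * ((0) * (1) - (0) * (1)) - (0) * ((1) * (1) - (0) * (0)) + (1) * ((1) * (1) - (0) * (0))"] by simp
  qed
  have d3b: "det (W3 - 1\<^sub>m 3) \<noteq> 0"
  proof -
    have m: "W3 - 1\<^sub>m 3 \<in> carrier_mat 3 3" by (rule minus_carrier_mat) simp
    have "det (W3 - 1\<^sub>m 3) = of_int ((1 - (1)) * ((0 - (1)) * (1 - (1)) - (0 - (0)) * (1 - (0))) - (0 - (0)) * ((1 - (0)) * (1 - (1)) - (0 - (0)) * (0 - (0))) + (1 - (0)) * ((1 - (0)) * (1 - (0)) - (0 - (1)) * (0 - (0))))" by (subst det3[OF m]) (simp add: W3_def)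
    then show ?thesis using ch[of "(1 - (1)) * ((0 - (1)) * (1 - (1)) - (0 - (0)) * (1 - (0))) - (0 - (0)) * ((1 - (0)) * (1 - (1)) - (0 - (0)) * (0 - (0))) + (1 - (0)) * ((1 - (0)) * (1 - (0)) - (0 - (1)) * (0 - (0)))"] by simp
  qed
  have e3: "det (A - W3) = of_int ((z00 - (1)) * ((z11 - (0)) * (z22 - (1)) - (z12 - (0)) * (z21 - (1))) - (z01 - (0)) * ((z10 - (1)) * (z22 - (1)) - (z12 - (0)) * (z20 - (0))) + (z02 - (1)) * ((z10 - (1)) * (z21 - (1)) - (z11 - (0)) * (z20 - (0))))"
  proof -
    have m: "A - W3 \<in> carrier_mat 3 3" by (rule minus_carrier_mat[OF c3])
    show ?thesis by (subst det3[OF m]) (simp add: W3_def z00(2) z00(2)[simplified] z01(2) z01(2)[simplified] z02(2) z02(2)[simplified] z10(2) z10(2)[simplified] z11(2) z11(2)[simplified] z12(2) z12(2)[simplified] z20(2) z20(2)[simplified] z21(2) z21(2)[simplified] z22(2) z22(2)[simplified])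
  qed
  define W4 :: "'a mat" where "W4 = Matrix.mat 3 3 (\<lambda>(i,j). of_int ([[0, 0, 1], [1, 0, 0], [0, 1, 1]] ! i ! j))"
  have c4: "W4 \<in> carrier_mat 3 3" unfolding W4_def by simp
  have d4a: "det W4 \<noteq> 0"
  proof -
    have "det W4 = of_int ((0) * ((0) * (1) - (0) * (1)) - (0) * ((1) * (1) - (0) * (0)) + (1) * ((1) * (1) - (0) * (0)))" by (subst det3[OF c4]) (simp add: W4_def)
    then show ?thesis using ch[of "(0) * ((0) * (1) - (0) * (1)) - (0) * ((1) * (1) - (0) * (0)) + (1) * ((1) * (1) - (0) * (0))"] by simp
  qed
  have d4b: "det (W4 - 1\<^sub>m 3) \<noteq> 0"
  proof -
    have m: "W4 - 1\<^sub>m 3 \<in> carrier_mat 3 3" by (rule minus_carrier_mat) simp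
    have "det (W4 - 1\<^sub>m 3) = of_int ((0 - (1)) * ((0 - (1)) * (1 - (1)) - (0 - (0)) * (1 - (0))) - (0 - (0)) * ((1 - (0)) * (1 - (1)) - (0 - (0)) * (0 - (0))) + (1 - (0)) * ((1 - (0)) * (1 - (0)) - (0 - (1)) * (0 - (0))))" by (subst det3[OF m]) (simp add: W4_def)
    then show ?thesis using ch[of "(0 - (1)) * ((0 - (1)) * (1 - (1)) - (0 - (0)) * (1 - (0))) - (0 - (0)) * ((1 - (0)) * (1 - (1)) - (0 - (0)) * (0 - (0))) + (1 - (0)) * ((1 - (0)) * (1 - (0)) - (0 - (1)) * (0 - (0)))"] by simp
  qed
  have e4: "det (A - W4) = of_int ((z00 - (0)) * ((z11 - (0)) * (z22 - (1)) - (z12 - (0)) * (z21 - (1))) - (z01 - (0)) * ((z10 - (1)) * (z22 - (1)) - (z12 - (0)) * (z20 - (0))) + (z02 - (1)) * ((z10 - (1)) * (z21 - (1)) - (z11 - (0)) * (z20 - (0))))"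
  proof -
    have m: "A - W4 \<in> carrier_mat 3 3" by (rule minus_carrier_mat[OF c4])
    show ?thesis by (subst det3[OF m]) (simp add: W4_def z00(2) z00(2)[simplified] z01(2) z01(2)[simplified] z02(2) z02(2)[simplified] z10(2) z10(2)[simplified] z11(2) z11(2)[simplified] z12(2) z12(2)[simplified] z20(2) z20(2)[simplified] z21(2) z21(2)[simplified] z22(2) z22(2)[simplified])
  qed
  define W5 :: "'a mat" where "W5 = Matrix.mat 3 3 (\<lambda>(i,j). of_int ([[0, 1, 0], [1, 1, 1], [1, 1, 0]] ! i ! j))"
  have c5: "W5 \<in> carrier_mat 3 3" unfolding W5_def by simp
  have d5a: "det W5 \<noteq> 0"
  proof -
    have "det W5 = of_int ((0) * ((1) * (0) - (1) * (1)) - (1) * ((1) * (0) - (1) * (1)) + (0) * ((1) * (1) - (1) * (1)))" by (subst det3[OF c5]) (simp add: W5_def)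
    then show ?thesis using ch[of "(0) * ((1) * (0) - (1) * (1)) - (1) * ((1) * (0) - (1) * (1)) + (0) * ((1) * (1) - (1) * (1))"] by simp
  qed
  have d5b: "det (W5 - 1\<^sub>m 3) \<noteq> 0"
  proof -
    have m: "W5 - 1\<^sub>m 3 \<in> carrier_mat 3 3" by (rule minus_carrier_mat) simp
    have "det (W5 - 1\<^sub>m 3) = of_int ((0 - (1)) * ((1 - (1)) * (0 - (1)) - (1 - (0)) * (1 - (0))) - (1 - (0)) * ((1 - (0)) * (0 - (1)) - (1 - (0)) * (1 - (0))) + (0 - (0)) * ((1 - (0)) * (1 - (0)) - (1 - (1)) * (1 - (0))))" by (subst det3[OF m]) (simp add: W5_def)
    then show ?thesis using ch[of "(0 - (1)) * ((1 - (1)) * (0 - (1)) - (1 - (0)) * (1 - (0))) - (1 - (0)) * ((1 - (0)) * (0 - (1)) - (1 - (0)) * (1 - (0))) + (0 - (0)) * ((1 - (0)) * (1 - (0)) - (1 - (1)) * (1 - (0)))"] by simp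
  qed
  have e5: "det (A - W5) = of_int ((z00 - (0)) * ((z11 - (1)) * (z22 - (0)) - (z12 - (1)) * (z21 - (1))) - (z01 - (1)) * ((z10 - (1)) * (z22 - (0)) - (z12 - (1)) * (z20 - (1))) + (z02 - (0)) * ((z10 - (1)) * (z21 - (1)) - (z11 - (1)) * (z20 - (1))))"
  proof -
    have m: "A - W5 \<in> carrier_mat 3 3" by (rule minus_carrier_mat[OF c5])
    show ?thesis by (subst det3[OF m]) (simp add: W5_def z00(2) z00(2)[simplified] z01(2) z01(2)[simplified] z02(2) z02(2)[simplified] z10(2) z10(2)[simplified] z11(2) z11(2)[simplified] z12(2) z12(2)[simplified] z20(2) z20(2)[simplified] z21(2) z21(2)[simplified] z22(2) z22(2)[simplified])
  qed
  define W6 :: "'a mat" where "W6 = Matrix.mat 3 3 (\<lambda>(i,j). of_int ([[0, 1, 0], [0, 0, 1], [1, 1, 0]] ! i ! j))"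
  have c6: "W6 \<in> carrier_mat 3 3" unfolding W6_def by simp
  have d6a: "det W6 \<noteq> 0"
  proof -
    have "det W6 = of_int ((0) * ((0) * (0) - (1) * (1)) - (1) * ((0) * (0) - (1) * (1)) + (0) * ((0) * (1) - (0) * (1)))" by (subst det3[OF c6]) (simp add: W6_def)
    then show ?thesis using ch[of "(0) * ((0) * (0) - (1) * (1)) - (1) * ((0) * (0) - (1) * (1)) + (0) * ((0) * (1) - (0) * (1))"] by simp
  qed
  have d6b: "det (W6 - 1\<^sub>m 3) \<noteq> 0"
  proof -
    have m: "W6 - 1\<^sub>m 3 \<in> carrier_mat 3 3" by (rule minus_carrier_mat) simp
    have "det (W6 - 1\<^sub>m 3) = of_int ((0 - (1)) * ((0 - (1)) * (0 - (1)) - (1 - (0)) * (1 - (0))) - (1 - (0)) * ((0 - (0)) * (0 - (1)) - (1 - (0)) * (1 - (0))) + (0 - (0)) * ((0 - (0)) * (1 - (0)) - (0 - (1)) * (1 - (0))))" by (subst det3[OF m]) (simp add: W6_def)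
    then show ?thesis using ch[of "(0 - (1)) * ((0 - (1)) * (0 - (1)) - (1 - (0)) * (1 - (0))) - (1 - (0)) * ((0 - (0)) * (0 - (1)) - (1 - (0)) * (1 - (0))) + (0 - (0)) * ((0 - (0)) * (1 - (0)) - (0 - (1)) * (1 - (0)))"] by simp
  qed
  have e6: "det (A - W6) = of_int ((z00 - (0)) * ((z11 - (0)) * (z22 - (0)) - (z12 - (1)) * (z21 - (1))) - (z01 - (1)) * ((z10 - (0)) * (z22 - (0)) - (z12 - (1)) * (z20 - (1))) + (z02 - (0)) * ((z10 - (0)) * (z21 - (1)) - (z11 - (0)) * (z20 - (1))))"
  proof -
    have m: "A - W6 \<in> carrier_mat 3 3" by (rule minus_carrier_mat[OF c6])
    show ?thesis by (subst det3[OF m]) (simp add: W6_def z00(2) z00(2)[simplified] z01(2) z01(2)[simplified] z02(2) z02(2)[simplified] z10(2) z10(2)[simplified] z11(2) z11(2)[simplified] z12(2) z12(2)[simplified] z20(2) z20(2)[simplified] z21(2) z21(2)[simplified] z22(2) z22(2)[simplified])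
  qed
  define W7 :: "'a mat" where "W7 = Matrix.mat 3 3 (\<lambda>(i,j). of_int ([[1, 0, 1], [1, 1, 0], [1, 1, 1]] ! i ! j))"
  have c7: "W7 \<in> carrier_mat 3 3" unfolding W7_def by simp
  have d7a: "det W7 \<noteq> 0"
  proof -
    have "det W7 = of_int ((1) * ((1) * (1) - (0) * (1)) - (0) * ((1) * (1) - (0) * (1)) + (1) * ((1) * (1) - (1) * (1)))" by (subst det3[OF c7]) (simp add: W7_def)
    then show ?thesis using ch[of "(1) * ((1) * (1) - (0) * (1)) - (0) * ((1) * (1) - (0) * (1)) + (1) * ((1) * (1) - (1) * (1))"] by simp
  qed
  have d7b: "det (W7 - 1\<^sub>m 3) \<noteq> 0"
  proof -
    have m: "W7 - 1\<^sub>m 3 \<in> carrier_mat 3 3" by (rule minus_carrier_mat) simp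
    have "det (W7 - 1\<^sub>m 3) = of_int ((1 - (1)) * ((1 - (1)) * (1 - (1)) - (0 - (0)) * (1 - (0))) - (0 - (0)) * ((1 - (0)) * (1 - (1)) - (0 - (0)) * (1 - (0))) + (1 - (0)) * ((1 - (0)) * (1 - (0)) - (1 - (1)) * (1 - (0))))" by (subst det3[OF m]) (simp add: W7_def)
    then show ?thesis using ch[of "(1 - (1)) * ((1 - (1)) * (1 - (1)) - (0 - (0)) * (1 - (0))) - (0 - (0)) * ((1 - (0)) * (1 - (1)) - (0 - (0)) * (1 - (0))) + (1 - (0)) * ((1 - (0)) * (1 - (0)) - (1 - (1)) * (1 - (0)))"] by simp
  qed
  have e7: "det (A - W7) = of_int ((z00 - (1)) * ((z11 - (1)) * (z22 - (1)) - (z12 - (0)) * (z21 - (1))) - (z01 - (0)) * ((z10 - (1)) * (z22 - (1)) - (z12 - (0)) * (z20 - (1))) + (z02 - (1)) * ((z10 - (1)) * (z21 - (1)) - (z11 - (1)) * (z20 - (1))))"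
  proof -
    have m: "A - W7 \<in> carrier_mat 3 3" by (rule minus_carrier_mat[OF c7])
    show ?thesis by (subst det3[OF m]) (simp add: W7_def z00(2) z00(2)[simplified] z01(2) z01(2)[simplified] z02(2) z02(2)[simplified] z10(2) z10(2)[simplified] z11(2) z11(2)[simplified] z12(2) z12(2)[simplified] z20(2) z20(2)[simplified] z21(2) z21(2)[simplified] z22(2) z22(2)[simplified])
  qed
  define W8 :: "'a mat" where "W8 = Matrix.mat 3 3 (\<lambda>(i,j). of_int ([[0, 0, 1], [0, 1, 1], [1, 1, 1]] ! i ! j))"
  have c8: "W8 \<in> carrier_mat 3 3" unfolding W8_def by simp
  have d8a: "det W8 \<noteq> 0"
  proof -
    have "det W8 = of_int ((0) * ((1) * (1) - (1) * (1)) - (0) * ((0) * (1) - (1) * (1)) + (1) * ((0) * (1) - (1) * (1)))" by (subst det3[OF c8]) (simp add: W8_def)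
    then show ?thesis using ch[of "(0) * ((1) * (1) - (1) * (1)) - (0) * ((0) * (1) - (1) * (1)) + (1) * ((0) * (1) - (1) * (1))"] by simp
  qed
  have d8b: "det (W8 - 1\<^sub>m 3) \<noteq> 0"
  proof -
    have m: "W8 - 1\<^sub>m 3 \<in> carrier_mat 3 3" by (rule minus_carrier_mat) simp
    have "det (W8 - 1\<^sub>m 3) = of_int ((0 - (1)) * ((1 - (1)) * (1 - (1)) - (1 - (0)) * (1 - (0))) - (0 - (0)) * ((0 - (0)) * (1 - (1)) - (1 - (0)) * (1 - (0))) + (1 - (0)) * ((0 - (0)) * (1 - (0)) - (1 - (1)) * (1 - (0))))" by (subst det3[OF m]) (simp add: W8_def)
    then show ?thesis using ch[of "(0 - (1)) * ((1 - (1)) * (1 - (1)) - (1 - (0)) * (1 - (0))) - (0 - (0)) * ((0 - (0)) * (1 - (1)) - (1 - (0)) * (1 - (0))) + (1 - (0)) * ((0 - (0)) * (1 - (0)) - (1 - (1)) * (1 - (0)))"] by simp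
  qed
  have e8: "det (A - W8) = of_int ((z00 - (0)) * ((z11 - (1)) * (z22 - (1)) - (z12 - (1)) * (z21 - (1))) - (z01 - (0)) * ((z10 - (0)) * (z22 - (1)) - (z12 - (1)) * (z20 - (1))) + (z02 - (1)) * ((z10 - (0)) * (z21 - (1)) - (z11 - (1)) * (z20 - (1))))"
  proof -
    have m: "A - W8 \<in> carrier_mat 3 3" by (rule minus_carrier_mat[OF c8])
    show ?thesis by (subst det3[OF m]) (simp add: W8_def z00(2) z00(2)[simplified] z01(2) z01(2)[simplified] z02(2) z02(2)[simplified] z10(2) z10(2)[simplified] z11(2) z11(2)[simplified] z12(2) z12(2)[simplified] z20(2) z20(2)[simplified] z21(2) z21(2)[simplified] z22(2) z22(2)[simplified])
  qed
  define W9 :: "'a mat" where "W9 = Matrix.mat 3 3 (\<lambda>(i,j). of_int ([[0, 0, 1], [1, 0, 0], [1, 1, 0]] ! i ! j))"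
  have c9: "W9 \<in> carrier_mat 3 3" unfolding W9_def by simp
  have d9a: "det W9 \<noteq> 0"
  proof -
    have "det W9 = of_int ((0) * ((0) * (0) - (0) * (1)) - (0) * ((1) * (0) - (0) * (1)) + (1) * ((1) * (1) - (0) * (1)))" by (subst det3[OF c9]) (simp add: W9_def)
    then show ?thesis using ch[of "(0) * ((0) * (0) - (0) * (1)) - (0) * ((1) * (0) - (0) * (1)) + (1) * ((1) * (1) - (0) * (1))"] by simp
  qed
  have d9b: "det (W9 - 1\<^sub>m 3) \<noteq> 0"
  proof -
    have m: "W9 - 1\<^sub>m 3 \<in> carrier_mat 3 3" by (rule minus_carrier_mat) simp
    have "det (W9 - 1\<^sub>m 3) = of_int ((0 - (1)) * ((0 - (1)) * (0 - (1)) - (0 - (0)) * (1 - (0))) - (0 - (0)) * ((1 - (0)) * (0 - (1)) - (0 - (0)) * (1 - (0))) + (1 - (0)) * ((1 - (0)) * (1 - (0)) - (0 - (1)) * (1 - (0))))" by (subst det3[OF m]) (simp add: W9_def)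
    then show ?thesis using ch[of "(0 - (1)) * ((0 - (1)) * (0 - (1)) - (0 - (0)) * (1 - (0))) - (0 - (0)) * ((1 - (0)) * (0 - (1)) - (0 - (0)) * (1 - (0))) + (1 - (0)) * ((1 - (0)) * (1 - (0)) - (0 - (1)) * (1 - (0)))"] by simp
  qed
  have e9: "det (A - W9) = of_int ((z00 - (0)) * ((z11 - (0)) * (z22 - (0)) - (z12 - (0)) * (z21 - (1))) - (z01 - (0)) * ((z10 - (1)) * (z22 - (0)) - (z12 - (0)) * (z20 - (1))) + (z02 - (1)) * ((z10 - (1)) * (z21 - (1)) - (z11 - (0)) * (z20 - (1))))"
  proof -
    have m: "A - W9 \<in> carrier_mat 3 3" by (rule minus_carrier_mat[OF c9])
    show ?thesis by (subst det3[OF m]) (simp add: W9_def z00(2) z00(2)[simplified] z01(2) z01(2)[simplified] z02(2) z02(2)[simplified] z10(2) z10(2)[simplified] z11(2) z11(2)[simplified] z12(2) z12(2)[simplified] z20(2) z20(2)[simplified] z21(2) z21(2)[simplified] z22(2) z22(2)[simplified])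
  qed
  show ?thesis
  proof -
    from key show ?thesis
    proof (elim disjE)
      assume "\<not> 2 dvd ((z00 - (0)) * ((z11 - (1)) * (z22 - (0)) - (z12 - (1)) * (z21 - (1))) - (z01 - (0)) * ((z10 - (0)) * (z22 - (0)) - (z12 - (1)) * (z20 - (1))) + (z02 - (1)) * ((z10 - (0)) * (z21 - (1)) - (z11 - (1)) * (z20 - (1))))"
      then have "det (A - W0) \<noteq> 0" by (simp only: e0 ch not_False_eq_True)
      then show ?thesis by (rule goodI[OF c0 d0a d0b])
    next
      assume "\<not> 2 dvd ((z00 - (0)) * ((z11 - (0)) * (z22 - (0)) - (z12 - (1)) * (z21 - (0))) - (z01 - (1)) * ((z10 - (1)) * (z22 - (0)) - (z12 - (1)) * (z20 - (1))) + (z02 - (0)) * ((z10 - (1)) * (z21 - (0)) - (z11 - (0)) * (z20 - (1))))"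
      then have "det (A - W1) \<noteq> 0" by (simp only: e1 ch not_False_eq_True)
      then show ?thesis by (rule goodI[OF c1 d1a d1b])
    next
      assume "\<not> 2 dvd ((z00 - (0)) * ((z11 - (1)) * (z22 - (0)) - (z12 - (1)) * (z21 - (1))) - (z01 - (1)) * ((z10 - (1)) * (z22 - (0)) - (z12 - (1)) * (z20 - (0))) + (z02 - (1)) * ((z10 - (1)) * (z21 - (1)) - (z11 - (1)) * (z20 - (0))))"
      then have "det (A - W2) \<noteq> 0" by (simp only: e2 ch not_False_eq_True)
      then show ?thesis by (rule goodI[OF c2 d2a d2b])
    next
      assume "\<not> 2 dvd ((z00 - (1)) * ((z11 - (0)) * (z22 - (1)) - (z12 - (0)) * (z21 - (1))) - (z01 - (0)) * ((z10 - (1)) * (z22 - (1)) - (z12 - (0)) * (z20 - (0))) + (z02 - (1)) * ((z10 - (1)) * (z21 - (1)) - (z11 - (0)) * (z20 - (0))))"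
      then have "det (A - W3) \<noteq> 0" by (simp only: e3 ch not_False_eq_True)
      then show ?thesis by (rule goodI[OF c3 d3a d3b])
    next
      assume "\<not> 2 dvd ((z00 - (0)) * ((z11 - (0)) * (z22 - (1)) - (z12 - (0)) * (z21 - (1))) - (z01 - (0)) * ((z10 - (1)) * (z22 - (1)) - (z12 - (0)) * (z20 - (0))) + (z02 - (1)) * ((z10 - (1)) * (z21 - (1)) - (z11 - (0)) * (z20 - (0))))"
      then have "det (A - W4) \<noteq> 0" by (simp only: e4 ch not_False_eq_True)
      then show ?thesis by (rule goodI[OF c4 d4a d4b])
    next
      assume "\<not> 2 dvd ((z00 - (0)) * ((z11 - (1)) * (z22 - (0)) - (z12 - (1)) * (z21 - (1))) - (z01 - (1)) * ((z10 - (1)) * (z22 - (0)) - (z12 - (1)) * (z20 - (1))) + (z02 - (0)) * ((z10 - (1)) * (z21 - (1)) - (z11 - (1)) * (z20 - (1))))"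
      then have "det (A - W5) \<noteq> 0" by (simp only: e5 ch not_False_eq_True)
      then show ?thesis by (rule goodI[OF c5 d5a d5b])
    next
      assume "\<not> 2 dvd ((z00 - (0)) * ((z11 - (0)) * (z22 - (0)) - (z12 - (1)) * (z21 - (1))) - (z01 - (1)) * ((z10 - (0)) * (z22 - (0)) - (z12 - (1)) * (z20 - (1))) + (z02 - (0)) * ((z10 - (0)) * (z21 - (1)) - (z11 - (0)) * (z20 - (1))))"
      then have "det (A - W6) \<noteq> 0" by (simp only: e6 ch not_False_eq_True)
      then show ?thesis by (rule goodI[OF c6 d6a d6b])
    next
      assume "\<not> 2 dvd ((z00 - (1)) * ((z11 - (1)) * (z22 - (1)) - (z12 - (0)) * (z21 - (1))) - (z01 - (0)) * ((z10 - (1)) * (z22 - (1)) - (z12 - (0)) * (z20 - (1))) + (z02 - (1)) * ((z10 - (1)) * (z21 - (1)) - (z11 - (1)) * (z20 - (1))))"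
      then have "det (A - W7) \<noteq> 0" by (simp only: e7 ch not_False_eq_True)
      then show ?thesis by (rule goodI[OF c7 d7a d7b])
    next
      assume "\<not> 2 dvd ((z00 - (0)) * ((z11 - (1)) * (z22 - (1)) - (z12 - (1)) * (z21 - (1))) - (z01 - (0)) * ((z10 - (0)) * (z22 - (1)) - (z12 - (1)) * (z20 - (1))) + (z02 - (1)) * ((z10 - (0)) * (z21 - (1)) - (z11 - (1)) * (z20 - (1))))"
      then have "det (A - W8) \<noteq> 0" by (simp only: e8 ch not_False_eq_True)
      then show ?thesis by (rule goodI[OF c8 d8a d8b])
    next
      assume "\<not> 2 dvd ((z00 - (0)) * ((z11 - (0)) * (z22 - (0)) - (z12 - (0)) * (z21 - (1))) - (z01 - (0)) * ((z10 - (1)) * (z22 - (0)) - (z12 - (0)) * (z20 - (1))) + (z02 - (1)) * ((z10 - (1)) * (z21 - (1)) - (z11 - (0)) * (z20 - (1))))"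
      then have "det (A - W9) \<noteq> 0" by (simp only: e9 ch not_False_eq_True)
      then show ?thesis by (rule goodI[OF c9 d9a d9b])
    qed
  qed
qed

lemma negI3_F3:
  fixes A :: "'a::field mat"
  assumes A: "A \<in> carrier_mat 3 3"
    and ent00: "\<exists>z::int. z \<in> {-1} \<and> A $$ (0,0) = of_int z"
    and ent01: "\<exists>z::int. z \<in> {0} \<and> A $$ (0,1) = of_int z"
    and ent02: "\<exists>z::int. z \<in> {0} \<and> A $$ (0,2) = of_int z"
    and ent10: "\<exists>z::int. z \<in> {0} \<and> A $$ (1,0) = of_int z"
    and ent11: "\<exists>z::int. z \<in> {-1} \<and> A $$ (1,1) = of_int z"
    and ent12: "\<exists>z::int. z \<in> {0} \<and> A $$ (1,2) = of_int z"
    and ent20: "\<exists>z::int. z \<in> {0} \<and> A $$ (2,0) = of_int z"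
    and ent21: "\<exists>z::int. z \<in> {0} \<and> A $$ (2,1) = of_int z"
    and ent22: "\<exists>z::int. z \<in> {-1} \<and> A $$ (2,2) = of_int z"
    and ch: "\<And>z::int. (of_int z :: 'a) = 0 \<longleftrightarrow> 3 dvd z"
  shows "good 3 A"
proof -
  obtain z00 :: int where z00: "z00 \<in> {-1}" "A $$ (0,0) = of_int z00" using ent00 by auto
  obtain z01 :: int where z01: "z01 \<in> {0}" "A $$ (0,1) = of_int z01" using ent01 by auto
  obtain z02 :: int where z02: "z02 \<in> {0}" "A $$ (0,2) = of_int z02" using ent02 by auto
  obtain z10 :: int where z10: "z10 \<in> {0}" "A $$ (1,0) = of_int z10" using ent10 by auto
  obtain z11 :: int where z11: "z11 \<in> {-1}" "A $$ (1,1) = of_int z11" using ent11 by auto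
  obtain z12 :: int where z12: "z12 \<in> {0}" "A $$ (1,2) = of_int z12" using ent12 by auto
  obtain z20 :: int where z20: "z20 \<in> {0}" "A $$ (2,0) = of_int z20" using ent20 by auto
  obtain z21 :: int where z21: "z21 \<in> {0}" "A $$ (2,1) = of_int z21" using ent21 by auto
  obtain z22 :: int where z22: "z22 \<in> {-1}" "A $$ (2,2) = of_int z22" using ent22 by auto
  have key: "\<not> 3 dvd ((z00 - (0)) * ((z11 - (0)) * (z22 - (0)) - (z12 - (1)) * (z21 - (1))) - (z01 - (1)) * ((z10 - (0)) * (z22 - (0)) - (z12 - (1)) * (z20 - (1))) + (z02 - (0)) * ((z10 - (0)) * (z21 - (1)) - (z11 - (0)) * (z20 - (1))))"
    using z00(1) z01(1) z02(1) z10(1) z11(1) z12(1) z20(1) z21(1) z22(1) by (simp only: insert_iff empty_iff simp_thms) ((elim disjE)?; simp)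
  have dA: "dim_row A = 3" "dim_col A = 3" using A by auto
  define W0 :: "'a mat" where "W0 = Matrix.mat 3 3 (\<lambda>(i,j). of_int ([[0, 1, 0], [0, 0, 1], [1, 1, 0]] ! i ! j))"
  have c0: "W0 \<in> carrier_mat 3 3" unfolding W0_def by simp
  have d0a: "det W0 \<noteq> 0"
  proof -
    have "det W0 = of_int ((0) * ((0) * (0) - (1) * (1)) - (1) * ((0) * (0) - (1) * (1)) + (0) * ((0) * (1) - (0) * (1)))" by (subst det3[OF c0]) (simp add: W0_def)
    then show ?thesis using ch[of "(0) * ((0) * (0) - (1) * (1)) - (1) * ((0) * (0) - (1) * (1)) + (0) * ((0) * (1) - (0) * (1))"] by simp
  qed
  have d0b: "det (W0 - 1\<^sub>m 3) \<noteq> 0"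
  proof -
    have m: "W0 - 1\<^sub>m 3 \<in> carrier_mat 3 3" by (rule minus_carrier_mat) simp
    have "det (W0 - 1\<^sub>m 3) = of_int ((0 - (1)) * ((0 - (1)) * (0 - (1)) - (1 - (0)) * (1 - (0))) - (1 - (0)) * ((0 - (0)) * (0 - (1)) - (1 - (0)) * (1 - (0))) + (0 - (0)) * ((0 - (0)) * (1 - (0)) - (0 - (1)) * (1 - (0))))" by (subst det3[OF m]) (simp add: W0_def)
    then show ?thesis using ch[of "(0 - (1)) * ((0 - (1)) * (0 - (1)) - (1 - (0)) * (1 - (0))) - (1 - (0)) * ((0 - (0)) * (0 - (1)) - (1 - (0)) * (1 - (0))) + (0 - (0)) * ((0 - (0)) * (1 - (0)) - (0 - (1)) * (1 - (0)))"] by simp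
  qed
  have e0: "det (A - W0) = of_int ((z00 - (0)) * ((z11 - (0)) * (z22 - (0)) - (z12 - (1)) * (z21 - (1))) - (z01 - (1)) * ((z10 - (0)) * (z22 - (0)) - (z12 - (1)) * (z20 - (1))) + (z02 - (0)) * ((z10 - (0)) * (z21 - (1)) - (z11 - (0)) * (z20 - (1))))"
  proof -
    have m: "A - W0 \<in> carrier_mat 3 3" by (rule minus_carrier_mat[OF c0])
    show ?thesis by (subst det3[OF m]) (simp add: W0_def z00(2) z00(2)[simplified] z01(2) z01(2)[simplified] z02(2) z02(2)[simplified] z10(2) z10(2)[simplified] z11(2) z11(2)[simplified] z12(2) z12(2)[simplified] z20(2) z20(2)[simplified] z21(2) z21(2)[simplified] z22(2) z22(2)[simplified])
  qed
  show ?thesis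
  proof -
    from key show ?thesis
    proof -
      assume "\<not> 3 dvd ((z00 - (0)) * ((z11 - (0)) * (z22 - (0)) - (z12 - (1)) * (z21 - (1))) - (z01 - (1)) * ((z10 - (0)) * (z22 - (0)) - (z12 - (1)) * (z20 - (1))) + (z02 - (0)) * ((z10 - (0)) * (z21 - (1)) - (z11 - (0)) * (z20 - (1))))"
      then have "det (A - W0) \<noteq> 0" by (simp only: e0 ch not_False_eq_True)
      then show ?thesis by (rule goodI[OF c0 d0a d0b])
    qed
  qed
qed


lemma split_block_eqs:
  assumes "split_block A k k = (G,R,S,H)"
  shows "G = Matrix.mat k k (\<lambda>ij. A $$ ij)"
    "R = Matrix.mat k (dim_col A - k) (\<lambda>(i,j). A $$ (i, j + k))"
    "S = Matrix.mat (dim_row A - k) k (\<lambda>(i,j). A $$ (i + k, j))"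
    "H = Matrix.mat (dim_row A - k) (dim_col A - k) (\<lambda>(i,j). A $$ (i + k, j + k))"
  using assms unfolding split_block_def Let_def by auto

lemma RW_single:
  fixes R :: "'a::comm_ring_1 mat"
  assumes R: "R \<in> carrier_mat k m" and c: "c < m" and i: "i < k" and j: "j < l"
  shows "(R * Matrix.mat m l (\<lambda>(r,j). if r = c then w j else 0)) $$ (i,j) = R $$ (i,c) * w j"
proof -
  have "(R * Matrix.mat m l (\<lambda>(r,j). if r = c then w j else 0)) $$ (i,j)
      = (\<Sum>r\<in>{0..<m}. R $$ (i,r) * (if r = c then w j else 0))"
    using R i j by (simp add: scalar_prod_def)
  also have "\<dots> = (\<Sum>r\<in>{0..<m}. if r = c then R $$ (i,r) * w j else 0)"
    by (rule sum.cong) auto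
  also have "\<dots> = R $$ (i,c) * w j" using c by (simp add: sum.delta')
  finally show ?thesis .
qed

lemma tp_permutes: "a < (n::nat) \<Longrightarrow> b < n \<Longrightarrow> Transposition.transpose a b permutes {0..<n}"
  by (rule permutes_swap_id) auto

lemma reidx_carrier[simp]: "reidx p n A \<in> carrier_mat n n" by (simp add: reidx_def)
lemma reidx_index[simp]: "i < n \<Longrightarrow> j < n \<Longrightarrow> reidx p n A $$ (i,j) = A $$ (p i, p j)"
  by (simp add: reidx_def)

lemma F3_n3:
  fixes A :: "'a::{field,finite} mat"
  assumes c3: "CARD('a) = 3" and A: "A \<in> carrier_mat 3 3"
  shows "good 3 A"
proof -
  note f = F3_facts[OF c3]
  have ch: "\<And>z. (of_int z :: 'a) = 0 \<longleftrightarrow> 3 dvd z" by (rule F3_ch[OF c3])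
  have ent: "\<And>x::'a. \<exists>z::int. z \<in> {-1,0,1} \<and> x = of_int z" by (rule F3_ent[OF c3])
  have m1: "(-1::'a) \<noteq> 0" "(-1::'a) \<noteq> 1" using f(1) by auto
  have H2: "\<And>H::'a mat. H \<in> carrier_mat 2 2 \<Longrightarrow> good 2 H"
    by (rule brute_F3_2) (use ent ch in auto)
  have row0: "good 3 A'" if A': "A' \<in> carrier_mat 3 3"
     and cond: "A' $$ (0,0) \<noteq> -1 \<or> (\<exists>c. 0 < c \<and> c < 3 \<and> A' $$ (0,c) \<noteq> 0 \<and> A' $$ (0,0) = -1)" for A' :: "'a mat"
  proof -
    have A1: "A' \<in> carrier_mat (1+2) (1+2)" using A' unfolding carrier_mat_def by simp
    obtain G R S H where sb: "split_block A' 1 1 = (G,R,S,H)" by (cases "split_block A' 1 1") auto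
    note cc = split_carriers[OF A1 sb]
    note eqs = split_block_eqs[OF sb]
    have dA: "dim_row A' = 3" "dim_col A' = 3" using A' by auto
    have gH: "good 2 H" by (rule H2[OF cc(4)])
    from cond show ?thesis
    proof (elim disjE exE conjE)
      assume a: "A' $$ (0,0) \<noteq> -1"
      have "R * 0\<^sub>m 2 1 = 0\<^sub>m 1 1" by (rule right_mult_zero_mat[OF cc(2)])
      moreover have "G $$ (0,0) = A' $$ (0,0)" using eqs(1) by simp
      ultimately have "G $$ (0,0) - (-1) - (R * 0\<^sub>m 2 1) $$ (0,0) \<noteq> 0" using a
        by (simp add: add_eq_0_iff) (metis minus_equation_iff)
      then have "good (1+2) A'" by (rule step1[OF A1 sb m1 gH zero_carrier_mat])
      then show ?thesis by (simp add: numeral_3_eq_3)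
    next
      fix c assume c: "0 < c" "c < 3" "A' $$ (0,c) \<noteq> 0" "A' $$ (0,0) = -1"
      define W :: "'a mat" where "W = Matrix.mat 2 1 (\<lambda>(r,j). if r = c - 1 then (\<lambda>_. 1) j else 0)"
      have W: "W \<in> carrier_mat 2 1" unfolding W_def by simp
      have "(R * W) $$ (0,0) = R $$ (0, c - 1) * 1"
        unfolding W_def by (rule RW_single[OF cc(2)]) (use c in auto)
      also have "\<dots> = A' $$ (0, c)" using eqs(2) dA c by simp
      finally have rw: "(R * W) $$ (0,0) = A' $$ (0,c)" .
      have "G $$ (0,0) = -1" using eqs(1) c by simp
      then have "G $$ (0,0) - (-1) - (R * W) $$ (0,0) \<noteq> 0" using rw c by simp
      then have "good (1+2) A'" by (rule step1[OF A1 sb m1 gH W])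
      then show ?thesis by (simp add: numeral_3_eq_3)
    qed
  qed
  show ?thesis
  proof (cases "\<exists>i<3. A $$ (i,i) \<noteq> -1")
    case True
    then obtain i where i: "i < 3" "A $$ (i,i) \<noteq> -1" by auto
    define p where "p = Transposition.transpose 0 i"
    have p: "p permutes {0..<3}" unfolding p_def by (rule tp_permutes) (use i in auto)
    have "good 3 (reidx p 3 A)"
      by (rule row0) (use i in \<open>auto simp: p_def\<close>)
    then show ?thesis by (rule good_reidx_back[OF A p])
  next
    case False
    then have diag: "\<And>i. i < 3 \<Longrightarrow> A $$ (i,i) = -1" by auto
    show ?thesis
    proof (cases "\<exists>i<3. \<exists>j<3. i \<noteq> j \<and> A $$ (i,j) \<noteq> 0")
      case True
      then obtain i j where ij: "i < 3" "j < 3" "i \<noteq> j" "A $$ (i,j) \<noteq> 0" by auto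
      define p where "p = Transposition.transpose 0 i"
      have p: "p permutes {0..<3}" unfolding p_def by (rule tp_permutes) (use ij in auto)
      have pp: "p (p j) = j" unfolding p_def by simp
      have pj: "p j \<noteq> 0" using ij unfolding p_def
        by (metis transpose_apply_first transpose_apply_other transpose_apply_second)
      have pj3: "p j < 3" using p ij by (metis atLeastLessThan_iff permutes_in_image zero_le)
      have p0: "p 0 = i" unfolding p_def by simp
      have "good 3 (reidx p 3 A)"
      proof (rule row0)
        show "reidx p 3 A \<in> carrier_mat 3 3" by simp
        show "reidx p 3 A $$ (0,0) \<noteq> -1 \<or> (\<exists>c. 0 < c \<and> c < 3 \<and> reidx p 3 A $$ (0,c) \<noteq> 0 \<and> reidx p 3 A $$ (0,0) = -1)"
          using pj pj3 pp p0 ij diag by (intro disjI2 exI[of _ "p j"]) auto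
      qed
      then show ?thesis by (rule good_reidx_back[OF A p])
    next
      case False
      then have off: "\<And>i j. i < 3 \<Longrightarrow> j < 3 \<Longrightarrow> i \<noteq> j \<Longrightarrow> A $$ (i,j) = 0" by auto
      have e: "\<And>i j. i < 3 \<Longrightarrow> j < 3 \<Longrightarrow> A $$ (i,j) = (if i = j then of_int (-1) else of_int 0)"
        using diag off by auto
      show ?thesis
        by (rule negI3_F3[OF A]) (use e ch in \<open>auto intro!: exI[of _ "-1"] exI[of _ 0]\<close>)
    qed
  qed
qed

lemma crit2_F2:
  fixes A :: "'a::field mat"
  assumes A: "A \<in> carrier_mat 2 2"
    and ent: "\<And>i j. i < 2 \<Longrightarrow> j < 2 \<Longrightarrow> \<exists>z::int. z \<in> {0, 1} \<and> A $$ (i,j) = of_int z"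
    and ch: "\<And>z::int. (of_int z :: 'a) = 0 \<longleftrightarrow> 2 dvd z"
    and hyp: "A $$ (0,0) \<noteq> A $$ (1,1) \<or> (A $$ (0,1) = 0 \<and> A $$ (1,0) = 0)"
  shows "good 2 A"
proof -
  obtain z00 :: int where z00: "z00 \<in> {0, 1}" "A $$ (0,0) = of_int z00" using ent[of 0 0] by auto
  obtain z01 :: int where z01: "z01 \<in> {0, 1}" "A $$ (0,1) = of_int z01" using ent[of 0 1] by auto
  obtain z10 :: int where z10: "z10 \<in> {0, 1}" "A $$ (1,0) = of_int z10" using ent[of 1 0] by auto
  obtain z11 :: int where z11: "z11 \<in> {0, 1}" "A $$ (1,1) = of_int z11" using ent[of 1 1] by auto
  have z01z: "A $$ (0,1) = 0 \<Longrightarrow> z01 = 0" using z01 ch[of z01] by auto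
  have z10z: "A $$ (1,0) = 0 \<Longrightarrow> z10 = 0" using z10 ch[of z10] by auto
  have hyp': "z00 \<noteq> z11 \<or> (z01 = 0 \<and> z10 = 0)" using hyp z00(2) z11(2) z01z z10z by auto
  have key: "\<not> 2 dvd ((z00 - (0)) * (z11 - (1)) - (z01 - (1)) * (z10 - (1))) \<or> \<not> 2 dvd ((z00 - (1)) * (z11 - (0)) - (z01 - (1)) * (z10 - (1)))"
    using hyp' z00(1) z01(1) z10(1) z11(1) by (simp only: insert_iff empty_iff simp_thms) (elim disjE conjE; simp)
  define W0 :: "'a mat" where "W0 = Matrix.mat 2 2 (\<lambda>(i,j). of_int ([[0, 1], [1, 1]] ! i ! j))"
  have c0: "W0 \<in> carrier_mat 2 2" unfolding W0_def by simp
  have d0a: "det W0 \<noteq> 0"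
  proof -
    have "det W0 = of_int ((0) * (1) - (1) * (1))" by (subst det2[OF c0]) (simp add: W0_def)
    then show ?thesis using ch[of "(0) * (1) - (1) * (1)"] by simp
  qed
  have d0b: "det (W0 - 1\<^sub>m 2) \<noteq> 0"
  proof -
    have m: "W0 - 1\<^sub>m 2 \<in> carrier_mat 2 2" by (rule minus_carrier_mat) simp
    have "det (W0 - 1\<^sub>m 2) = of_int ((0 - (1)) * (1 - (1)) - (1 - (0)) * (1 - (0)))" by (subst det2[OF m]) (simp add: W0_def)
    then show ?thesis using ch[of "(0 - (1)) * (1 - (1)) - (1 - (0)) * (1 - (0))"] by simp
  qed
  define W1 :: "'a mat" where "W1 = Matrix.mat 2 2 (\<lambda>(i,j). of_int ([[1, 1], [1, 0]] ! i ! j))"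
  have c1: "W1 \<in> carrier_mat 2 2" unfolding W1_def by simp
  have d1a: "det W1 \<noteq> 0"
  proof -
    have "det W1 = of_int ((1) * (0) - (1) * (1))" by (subst det2[OF c1]) (simp add: W1_def)
    then show ?thesis using ch[of "(1) * (0) - (1) * (1)"] by simp
  qed
  have d1b: "det (W1 - 1\<^sub>m 2) \<noteq> 0"
  proof -
    have m: "W1 - 1\<^sub>m 2 \<in> carrier_mat 2 2" by (rule minus_carrier_mat) simp
    have "det (W1 - 1\<^sub>m 2) = of_int ((1 - (1)) * (0 - (1)) - (1 - (0)) * (1 - (0)))" by (subst det2[OF m]) (simp add: W1_def)
    then show ?thesis using ch[of "(1 - (1)) * (0 - (1)) - (1 - (0)) * (1 - (0))"] by simp
  qed
  have e0: "det (A - W0) = of_int ((z00 - (0)) * (z11 - (1)) - (z01 - (1)) * (z10 - (1)))"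
  proof -
    have m: "A - W0 \<in> carrier_mat 2 2" by (rule minus_carrier_mat[OF c0])
    show ?thesis by (subst det2[OF m]) (simp add: W0_def z00(2) z00(2)[simplified] z01(2) z01(2)[simplified] z10(2) z10(2)[simplified] z11(2) z11(2)[simplified])
  qed
  have e1: "det (A - W1) = of_int ((z00 - (1)) * (z11 - (0)) - (z01 - (1)) * (z10 - (1)))"
  proof -
    have m: "A - W1 \<in> carrier_mat 2 2" by (rule minus_carrier_mat[OF c1])
    show ?thesis by (subst det2[OF m]) (simp add: W1_def z00(2) z00(2)[simplified] z01(2) z01(2)[simplified] z10(2) z10(2)[simplified] z11(2) z11(2)[simplified])
  qed
  from key show ?thesis
  proof (elim disjE)
    assume "\<not> 2 dvd ((z00 - (0)) * (z11 - (1)) - (z01 - (1)) * (z10 - (1)))"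
    then have "det (A - W0) \<noteq> 0" by (simp only: e0 ch not_False_eq_True)
    then show ?thesis by (rule goodI[OF c0 d0a d0b])
  next
    assume "\<not> 2 dvd ((z00 - (1)) * (z11 - (0)) - (z01 - (1)) * (z10 - (1)))"
    then have "det (A - W1) \<noteq> 0" by (simp only: e1 ch not_False_eq_True)
    then show ?thesis by (rule goodI[OF c1 d1a d1b])
  qed
qed
lemma rlem_F2:
  fixes G :: "'a::field mat"
  assumes G: "G \<in> carrier_mat 2 2"
    and ent: "\<And>i j. i < 2 \<Longrightarrow> j < 2 \<Longrightarrow> \<exists>z::int. z \<in> {0, 1} \<and> G $$ (i,j) = of_int z"
    and entu: "\<And>x::'a. \<exists>z::int. z \<in> {0, 1} \<and> x = of_int z"
    and ch: "\<And>z::int. (of_int z :: 'a) = 0 \<longleftrightarrow> 2 dvd z"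
    and u: "u0 \<noteq> 0 \<or> u1 \<noteq> (0::'a)"
  shows "\<exists>X \<in> carrier_mat 2 2. det X \<noteq> 0 \<and> det (X - 1\<^sub>m 2) \<noteq> 0 \<and> (\<exists>w0 w1. det (G - X - Matrix.mat 2 2 (\<lambda>(i,j). (if i = 0 then u0 else u1) * (if j = 0 then w0 else w1))) \<noteq> 0)"
proof -
  obtain z00 :: int where z00: "z00 \<in> {0, 1}" "G $$ (0,0) = of_int z00" using ent[of 0 0] by auto
  obtain z01 :: int where z01: "z01 \<in> {0, 1}" "G $$ (0,1) = of_int z01" using ent[of 0 1] by auto
  obtain z10 :: int where z10: "z10 \<in> {0, 1}" "G $$ (1,0) = of_int z10" using ent[of 1 0] by auto
  obtain z11 :: int where z11: "z11 \<in> {0, 1}" "G $$ (1,1) = of_int z11" using ent[of 1 1] by auto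
  obtain v0 :: int where v0: "v0 \<in> {0, 1}" "u0 = of_int v0" using entu[of u0] by auto
  obtain v1 :: int where v1: "v1 \<in> {0, 1}" "u1 = of_int v1" using entu[of u1] by auto
  have hyp': "v0 \<noteq> 0 \<or> v1 \<noteq> 0" using u v0 v1 by auto
  have key: "\<not> 2 dvd ((z00 - (0) - v0 * (0)) * (z11 - (1) - v1 * (0)) - (z01 - (1) - v0 * (0)) * (z10 - (1) - v1 * (0))) \<or> \<not> 2 dvd ((z00 - (0) - v0 * (0)) * (z11 - (1) - v1 * (1)) - (z01 - (1) - v0 * (1)) * (z10 - (1) - v1 * (0))) \<or> \<not> 2 dvd ((z00 - (0) - v0 * (1)) * (z11 - (1) - v1 * (0)) - (z01 - (1) - v0 * (0)) * (z10 - (1) - v1 * (1))) \<or> \<not> 2 dvd ((z00 - (0) - v0 * (1)) * (z11 - (1) - v1 * (1)) - (z01 - (1) - v0 * (1)) * (z10 - (1) - v1 * (1))) \<or> \<not> 2 dvd ((z00 - (1) - v0 * (0)) * (z11 - (0) - v1 * (0)) - (z01 - (1) - v0 * (0)) * (z10 - (1) - v1 * (0))) \<or> \<not> 2 dvd ((z00 - (1) - v0 * (0)) * (z11 - (0) - v1 * (1)) - (z01 - (1) - v0 * (1)) * (z10 - (1) - v1 * (0))) \<or> \<not> 2 dvd ((z00 - (1) - v0 * (1)) * (z11 - (0) - v1 * (0)) - (z01 - (1) - v0 * (0)) * (z10 - (1) - v1 * (1))) \<or> \<not> 2 dvd ((z00 - (1) - v0 * (1)) * (z11 - (0) - v1 *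 (1)) - (z01 - (1) - v0 * (1)) * (z10 - (1) - v1 * (1)))"
    using hyp' z00(1) z01(1) z10(1) z11(1) v0(1) v1(1) by (simp only: insert_iff empty_iff simp_thms) (elim disjE conjE; simp)
  define W0 :: "'a mat" where "W0 = Matrix.mat 2 2 (\<lambda>(i,j). of_int ([[0, 1], [1, 1]] ! i ! j))"
  have c0: "W0 \<in> carrier_mat 2 2" unfolding W0_def by simp
  have d0a: "det W0 \<noteq> 0"
  proof -
    have "det W0 = of_int ((0) * (1) - (1) * (1))" by (subst det2[OF c0]) (simp add: W0_def)
    then show ?thesis using ch[of "(0) * (1) - (1) * (1)"] by simp
  qed
  have d0b: "det (W0 - 1\<^sub>m 2) \<noteq> 0"
  proof -
    have m: "W0 - 1\<^sub>m 2 \<in> carrier_mat 2 2" by (rule minus_carrier_mat) simp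
    have "det (W0 - 1\<^sub>m 2) = of_int ((0 - (1)) * (1 - (1)) - (1 - (0)) * (1 - (0)))" by (subst det2[OF m]) (simp add: W0_def)
    then show ?thesis using ch[of "(0 - (1)) * (1 - (1)) - (1 - (0)) * (1 - (0))"] by simp
  qed
  define W1 :: "'a mat" where "W1 = Matrix.mat 2 2 (\<lambda>(i,j). of_int ([[1, 1], [1, 0]] ! i ! j))"
  have c1: "W1 \<in> carrier_mat 2 2" unfolding W1_def by simp
  have d1a: "det W1 \<noteq> 0"
  proof -
    have "det W1 = of_int ((1) * (0) - (1) * (1))" by (subst det2[OF c1]) (simp add: W1_def)
    then show ?thesis using ch[of "(1) * (0) - (1) * (1)"] by simp
  qed
  have d1b: "det (W1 - 1\<^sub>m 2) \<noteq> 0"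
  proof -
    have m: "W1 - 1\<^sub>m 2 \<in> carrier_mat 2 2" by (rule minus_carrier_mat) simp
    have "det (W1 - 1\<^sub>m 2) = of_int ((1 - (1)) * (0 - (1)) - (1 - (0)) * (1 - (0)))" by (subst det2[OF m]) (simp add: W1_def)
    then show ?thesis using ch[of "(1 - (1)) * (0 - (1)) - (1 - (0)) * (1 - (0))"] by simp
  qed
  have e0: "det (G - W0 - Matrix.mat 2 2 (\<lambda>(i,j). (if i = 0 then u0 else u1) * (if j = 0 then (0::'a) else 0))) = of_int ((z00 - (0) - v0 * (0)) * (z11 - (1) - v1 * (0)) - (z01 - (1) - v0 * (0)) * (z10 - (1) - v1 * (0)))"
  proof -
    have m: "G - W0 - Matrix.mat 2 2 (\<lambda>(i,j). (if i = 0 then u0 else u1) * (if j = 0 then (0::'a) else 0)) \<in> carrier_mat 2 2" by (rule minus_carrier_mat) simp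
    show ?thesis by (subst det2[OF m]) (use G in \<open>simp add: W0_def z00(2) z00(2)[simplified] z01(2) z01(2)[simplified] z10(2) z10(2)[simplified] z11(2) z11(2)[simplified] v0(2) v1(2)\<close>)
  qed
  have e1: "det (G - W0 - Matrix.mat 2 2 (\<lambda>(i,j). (if i = 0 then u0 else u1) * (if j = 0 then (0::'a) else 1))) = of_int ((z00 - (0) - v0 * (0)) * (z11 - (1) - v1 * (1)) - (z01 - (1) - v0 * (1)) * (z10 - (1) - v1 * (0)))"
  proof -
    have m: "G - W0 - Matrix.mat 2 2 (\<lambda>(i,j). (if i = 0 then u0 else u1) * (if j = 0 then (0::'a) else 1)) \<in> carrier_mat 2 2" by (rule minus_carrier_mat) simp
    show ?thesis by (subst det2[OF m]) (use G in \<open>simp add: W0_def z00(2) z00(2)[simplified] z01(2) z01(2)[simplified] z10(2) z10(2)[simplified] z11(2) z11(2)[simplified] v0(2) v1(2)\<close>)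
  qed
  have e2: "det (G - W0 - Matrix.mat 2 2 (\<lambda>(i,j). (if i = 0 then u0 else u1) * (if j = 0 then (1::'a) else 0))) = of_int ((z00 - (0) - v0 * (1)) * (z11 - (1) - v1 * (0)) - (z01 - (1) - v0 * (0)) * (z10 - (1) - v1 * (1)))"
  proof -
    have m: "G - W0 - Matrix.mat 2 2 (\<lambda>(i,j). (if i = 0 then u0 else u1) * (if j = 0 then (1::'a) else 0)) \<in> carrier_mat 2 2" by (rule minus_carrier_mat) simp
    show ?thesis by (subst det2[OF m]) (use G in \<open>simp add: W0_def z00(2) z00(2)[simplified] z01(2) z01(2)[simplified] z10(2) z10(2)[simplified] z11(2) z11(2)[simplified] v0(2) v1(2)\<close>)
  qed
  have e3: "det (G - W0 - Matrix.mat 2 2 (\<lambda>(i,j). (if i = 0 then u0 else u1) * (if j = 0 then (1::'a) else 1))) = of_int ((z00 - (0) - v0 * (1)) * (z11 - (1) - v1 * (1)) - (z01 - (1) - v0 * (1)) * (z10 - (1) - v1 * (1)))"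
  proof -
    have m: "G - W0 - Matrix.mat 2 2 (\<lambda>(i,j). (if i = 0 then u0 else u1) * (if j = 0 then (1::'a) else 1)) \<in> carrier_mat 2 2" by (rule minus_carrier_mat) simp
    show ?thesis by (subst det2[OF m]) (use G in \<open>simp add: W0_def z00(2) z00(2)[simplified] z01(2) z01(2)[simplified] z10(2) z10(2)[simplified] z11(2) z11(2)[simplified] v0(2) v1(2)\<close>)
  qed
  have e4: "det (G - W1 - Matrix.mat 2 2 (\<lambda>(i,j). (if i = 0 then u0 else u1) * (if j = 0 then (0::'a) else 0))) = of_int ((z00 - (1) - v0 * (0)) * (z11 - (0) - v1 * (0)) - (z01 - (1) - v0 * (0)) * (z10 - (1) - v1 * (0)))"
  proof -
    have m: "G - W1 - Matrix.mat 2 2 (\<lambda>(i,j). (if i = 0 then u0 else u1) * (if j = 0 then (0::'a) else 0)) \<in> carrier_mat 2 2" by (rule minus_carrier_mat) simp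
    show ?thesis by (subst det2[OF m]) (use G in \<open>simp add: W1_def z00(2) z00(2)[simplified] z01(2) z01(2)[simplified] z10(2) z10(2)[simplified] z11(2) z11(2)[simplified] v0(2) v1(2)\<close>)
  qed
  have e5: "det (G - W1 - Matrix.mat 2 2 (\<lambda>(i,j). (if i = 0 then u0 else u1) * (if j = 0 then (0::'a) else 1))) = of_int ((z00 - (1) - v0 * (0)) * (z11 - (0) - v1 * (1)) - (z01 - (1) - v0 * (1)) * (z10 - (1) - v1 * (0)))"
  proof -
    have m: "G - W1 - Matrix.mat 2 2 (\<lambda>(i,j). (if i = 0 then u0 else u1) * (if j = 0 then (0::'a) else 1)) \<in> carrier_mat 2 2" by (rule minus_carrier_mat) simp
    show ?thesis by (subst det2[OF m]) (use G in \<open>simp add: W1_def z00(2) z00(2)[simplified] z01(2) z01(2)[simplified] z10(2) z10(2)[simplified] z11(2) z11(2)[simplified] v0(2) v1(2)\<close>)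
  qed
  have e6: "det (G - W1 - Matrix.mat 2 2 (\<lambda>(i,j). (if i = 0 then u0 else u1) * (if j = 0 then (1::'a) else 0))) = of_int ((z00 - (1) - v0 * (1)) * (z11 - (0) - v1 * (0)) - (z01 - (1) - v0 * (0)) * (z10 - (1) - v1 * (1)))"
  proof -
    have m: "G - W1 - Matrix.mat 2 2 (\<lambda>(i,j). (if i = 0 then u0 else u1) * (if j = 0 then (1::'a) else 0)) \<in> carrier_mat 2 2" by (rule minus_carrier_mat) simp
    show ?thesis by (subst det2[OF m]) (use G in \<open>simp add: W1_def z00(2) z00(2)[simplified] z01(2) z01(2)[simplified] z10(2) z10(2)[simplified] z11(2) z11(2)[simplified] v0(2) v1(2)\<close>)
  qed
  have e7: "det (G - W1 - Matrix.mat 2 2 (\<lambda>(i,j). (if i = 0 then u0 else u1) * (if j = 0 then (1::'a) else 1))) = of_int ((z00 - (1) - v0 * (1)) * (z11 - (0) - v1 * (1)) - (z01 - (1) - v0 * (1)) * (z10 - (1) - v1 * (1)))"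
  proof -
    have m: "G - W1 - Matrix.mat 2 2 (\<lambda>(i,j). (if i = 0 then u0 else u1) * (if j = 0 then (1::'a) else 1)) \<in> carrier_mat 2 2" by (rule minus_carrier_mat) simp
    show ?thesis by (subst det2[OF m]) (use G in \<open>simp add: W1_def z00(2) z00(2)[simplified] z01(2) z01(2)[simplified] z10(2) z10(2)[simplified] z11(2) z11(2)[simplified] v0(2) v1(2)\<close>)
  qed
  from key show ?thesis
  proof (elim disjE)
    assume "\<not> 2 dvd ((z00 - (0) - v0 * (0)) * (z11 - (1) - v1 * (0)) - (z01 - (1) - v0 * (0)) * (z10 - (1) - v1 * (0)))"
    then have "det (G - W0 - Matrix.mat 2 2 (\<lambda>(i,j). (if i = 0 then u0 else u1) * (if j = 0 then (0::'a) else 0))) \<noteq> 0" by (simp only: e0 ch not_False_eq_True)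
    then show ?thesis using c0 d0a d0b by blast
  next
    assume "\<not> 2 dvd ((z00 - (0) - v0 * (0)) * (z11 - (1) - v1 * (1)) - (z01 - (1) - v0 * (1)) * (z10 - (1) - v1 * (0)))"
    then have "det (G - W0 - Matrix.mat 2 2 (\<lambda>(i,j). (if i = 0 then u0 else u1) * (if j = 0 then (0::'a) else 1))) \<noteq> 0" by (simp only: e1 ch not_False_eq_True)
    then show ?thesis using c0 d0a d0b by blast
  next
    assume "\<not> 2 dvd ((z00 - (0) - v0 * (1)) * (z11 - (1) - v1 * (0)) - (z01 - (1) - v0 * (0)) * (z10 - (1) - v1 * (1)))"
    then have "det (G - W0 - Matrix.mat 2 2 (\<lambda>(i,j). (if i = 0 then u0 else u1) * (if j = 0 then (1::'a) else 0))) \<noteq> 0" by (simp only: e2 ch not_False_eq_True)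
    then show ?thesis using c0 d0a d0b by blast
  next
    assume "\<not> 2 dvd ((z00 - (0) - v0 * (1)) * (z11 - (1) - v1 * (1)) - (z01 - (1) - v0 * (1)) * (z10 - (1) - v1 * (1)))"
    then have "det (G - W0 - Matrix.mat 2 2 (\<lambda>(i,j). (if i = 0 then u0 else u1) * (if j = 0 then (1::'a) else 1))) \<noteq> 0" by (simp only: e3 ch not_False_eq_True)
    then show ?thesis using c0 d0a d0b by blast
  next
    assume "\<not> 2 dvd ((z00 - (1) - v0 * (0)) * (z11 - (0) - v1 * (0)) - (z01 - (1) - v0 * (0)) * (z10 - (1) - v1 * (0)))"
    then have "det (G - W1 - Matrix.mat 2 2 (\<lambda>(i,j). (if i = 0 then u0 else u1) * (if j = 0 then (0::'a) else 0))) \<noteq> 0" by (simp only: e4 ch not_False_eq_True)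
    then show ?thesis using c1 d1a d1b by blast
  next
    assume "\<not> 2 dvd ((z00 - (1) - v0 * (0)) * (z11 - (0) - v1 * (1)) - (z01 - (1) - v0 * (1)) * (z10 - (1) - v1 * (0)))"
    then have "det (G - W1 - Matrix.mat 2 2 (\<lambda>(i,j). (if i = 0 then u0 else u1) * (if j = 0 then (0::'a) else 1))) \<noteq> 0" by (simp only: e5 ch not_False_eq_True)
    then show ?thesis using c1 d1a d1b by blast
  next
    assume "\<not> 2 dvd ((z00 - (1) - v0 * (1)) * (z11 - (0) - v1 * (0)) - (z01 - (1) - v0 * (0)) * (z10 - (1) - v1 * (1)))"
    then have "det (G - W1 - Matrix.mat 2 2 (\<lambda>(i,j). (if i = 0 then u0 else u1) * (if j = 0 then (1::'a) else 0))) \<noteq> 0" by (simp only: e6 ch not_False_eq_True)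
    then show ?thesis using c1 d1a d1b by blast
  next
    assume "\<not> 2 dvd ((z00 - (1) - v0 * (1)) * (z11 - (0) - v1 * (1)) - (z01 - (1) - v0 * (1)) * (z10 - (1) - v1 * (1)))"
    then have "det (G - W1 - Matrix.mat 2 2 (\<lambda>(i,j). (if i = 0 then u0 else u1) * (if j = 0 then (1::'a) else 1))) \<noteq> 0" by (simp only: e7 ch not_False_eq_True)
    then show ?thesis using c1 d1a d1b by blast
  qed
qed


lemma split_block_transpose:
  assumes A: "A \<in> carrier_mat (k+m) (k+m)" and sb: "split_block A k k = (G,R,S,H)"
  shows "split_block (transpose_mat A) k k = (transpose_mat G, transpose_mat S, transpose_mat R, transpose_mat H)"
proof -
  obtain G' R' S' H' where sb': "split_block (transpose_mat A) k k = (G',R',S',H')"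
    by (cases "split_block (transpose_mat A) k k") auto
  note e = split_block_eqs[OF sb] and e' = split_block_eqs[OF sb']
  have d: "dim_row A = k + m" "dim_col A = k + m" using A by auto
  have "G' = transpose_mat G" "R' = transpose_mat S" "S' = transpose_mat R" "H' = transpose_mat H"
    unfolding e e' using d by (auto intro!: eq_matI)
  then show ?thesis using sb' by simp
qed

lemma good_transpose_back:
  fixes A :: "'a::field mat"
  assumes A: "A \<in> carrier_mat n n" and g: "good n (transpose_mat A)"
  shows "good n A"
  using good_transpose[of "transpose_mat A" n] A g by simp

lemma pair_step:
  fixes A :: "'a::{field,finite} mat"
  assumes c2: "CARD('a) = 2" and A: "A \<in> carrier_mat (2+m) (2+m)"
    and sb: "split_block A 2 2 = (G,R,S,H)" and gH: "good m H"
    and c: "c < m" and nz: "R $$ (0,c) \<noteq> 0 \<or> R $$ (1,c) \<noteq> 0"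
  shows "good (2+m) A"
proof -
  note cc = split_carriers[OF A sb]
  have ch: "\<And>z. (of_int z :: 'a) = 0 \<longleftrightarrow> 2 dvd z" by (rule F2_ch[OF c2])
  have ent: "\<And>x::'a. \<exists>z::int. z \<in> {0,1} \<and> x = of_int z" by (rule F2_ent[OF c2])
  obtain X w0 w1 where X: "X \<in> carrier_mat 2 2" "det X \<noteq> 0" "det (X - 1\<^sub>m 2) \<noteq> 0"
    and dX: "det (G - X - Matrix.mat 2 2 (\<lambda>(i,j). (if i = 0 then R $$ (0,c) else R $$ (1,c)) * (if j = 0 then w0 else w1))) \<noteq> 0"
    using rlem_F2[OF cc(1) _ ent ch nz] ent by blast
  obtain X2 where X2: "X2 \<in> carrier_mat m m" "det X2 \<noteq> 0" "det (X2 - 1\<^sub>m m) \<noteq> 0" "det (H - X2) \<noteq> 0"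
    using gH unfolding good_def by blast
  define W :: "'a mat" where "W = Matrix.mat m 2 (\<lambda>(r,j). if r = c then (\<lambda>j. if j = 0 then w0 else w1) j else 0)"
  have W: "W \<in> carrier_mat m 2" unfolding W_def by simp
  have RW: "R * W = Matrix.mat 2 2 (\<lambda>(i,j). (if i = 0 then R $$ (0,c) else R $$ (1,c)) * (if j = 0 then w0 else w1))"
  proof (rule eq_matI)
    fix i j assume ij: "i < dim_row (Matrix.mat 2 2 (\<lambda>(i,j). (if i = 0 then R $$ (0,c) else R $$ (1,c)) * (if j = 0 then w0 else w1)))"
      "j < dim_col (Matrix.mat 2 2 (\<lambda>(i,j). (if i = 0 then R $$ (0,c) else R $$ (1,c)) * (if j = 0 then w0 else w1)))"
    then have i: "i < 2" and j: "j < 2" by auto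
    have "(R * W) $$ (i,j) = R $$ (i,c) * (if j = 0 then w0 else w1)"
      unfolding W_def by (rule RW_single[OF cc(2) c i j])
    then show "(R * W) $$ (i,j) = Matrix.mat 2 2 (\<lambda>(i,j). (if i = 0 then R $$ (0,c) else R $$ (1,c)) * (if j = 0 then w0 else w1)) $$ (i,j)"
      using i j by (auto simp: less_2_cases_iff)
  qed (use cc(2) W in auto)
  show ?thesis
    by (rule step[OF A sb X X2 W]) (use dX RW in simp)
qed

lemma pair_step_T:
  fixes A :: "'a::{field,finite} mat"
  assumes c2: "CARD('a) = 2" and A: "A \<in> carrier_mat (2+m) (2+m)"
    and sb: "split_block A 2 2 = (G,R,S,H)" and gH: "good m H" and H: "H \<in> carrier_mat m m"
    and c: "c < m" and nz: "S $$ (c,0) \<noteq> 0 \<or> S $$ (c,1) \<noteq> 0"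
  shows "good (2+m) A"
proof -
  note cc = split_carriers[OF A sb]
  have sbT: "split_block (transpose_mat A) 2 2 = (transpose_mat G, transpose_mat S, transpose_mat R, transpose_mat H)"
    by (rule split_block_transpose[OF A sb])
  have AT: "transpose_mat A \<in> carrier_mat (2+m) (2+m)" using A by simp
  have gHT: "good m (transpose_mat H)" by (rule good_transpose[OF H gH])
  have "good (2+m) (transpose_mat A)"
    by (rule pair_step[OF c2 AT sbT gHT c]) (use nz cc(3) c in auto)
  then show ?thesis by (rule good_transpose_back[OF A])
qed

lemma F2_cond:
  fixes A :: "'a::{field,finite} mat"
  assumes c2: "CARD('a) = 2" and A: "A \<in> carrier_mat (2+m) (2+m)"
    and IH: "\<And>H::'a mat. H \<in> carrier_mat m m \<Longrightarrow> good m H"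
    and cond: "\<exists>c<m. (A $$ (0, c+2) \<noteq> 0 \<or> A $$ (1, c+2) \<noteq> 0 \<or> A $$ (c+2, 0) \<noteq> 0 \<or> A $$ (c+2, 1) \<noteq> 0)"
  shows "good (2+m) A"
proof -
  obtain G R S H where sb: "split_block A 2 2 = (G,R,S,H)" by (cases "split_block A 2 2") auto
  note cc = split_carriers[OF A sb] and e = split_block_eqs[OF sb]
  have d: "dim_row A = 2 + m" "dim_col A = 2 + m" using A by auto
  have gH: "good m H" by (rule IH[OF cc(4)])
  from cond obtain c where c: "c < m" and nz: "A $$ (0, c+2) \<noteq> 0 \<or> A $$ (1, c+2) \<noteq> 0 \<or> A $$ (c+2, 0) \<noteq> 0 \<or> A $$ (c+2, 1) \<noteq> 0"
    by blast
  have R: "R $$ (0,c) = A $$ (0, c+2)" "R $$ (1,c) = A $$ (1, c+2)" using e(2) d c by auto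
  have S: "S $$ (c,0) = A $$ (c+2, 0)" "S $$ (c,1) = A $$ (c+2, 1)" using e(3) d c by auto
  show ?thesis
  proof (cases "A $$ (0, c+2) \<noteq> 0 \<or> A $$ (1, c+2) \<noteq> 0")
    case True
    then show ?thesis by (intro pair_step[OF c2 A sb gH c]) (use R in auto)
  next
    case False
    then show ?thesis using nz by (intro pair_step_T[OF c2 A sb gH cc(4) c]) (use S in auto)
  qed
qed

lemma F2_big:
  fixes A :: "'a::{field,finite} mat"
  assumes c2: "CARD('a) = 2" and A: "A \<in> carrier_mat (2+m) (2+m)"
    and IH: "\<And>H::'a mat. H \<in> carrier_mat m m \<Longrightarrow> good m H" and m: "m \<ge> 1"
  shows "good (2+m) A"
proof -
  have ch: "\<And>z. (of_int z :: 'a) = 0 \<longleftrightarrow> 2 dvd z" by (rule F2_ch[OF c2])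
  have ent: "\<And>x::'a. \<exists>z::int. z \<in> {0,1} \<and> x = of_int z" by (rule F2_ent[OF c2])
  show ?thesis
  proof (cases "\<exists>c<m. (A $$ (0, c+2) \<noteq> 0 \<or> A $$ (1, c+2) \<noteq> 0 \<or> A $$ (c+2, 0) \<noteq> 0 \<or> A $$ (c+2, 1) \<noteq> 0)")
    case True show ?thesis by (rule F2_cond[OF c2 A IH True])
  next
    case False
    show ?thesis
    proof (cases "A $$ (0,0) \<noteq> A $$ (1,1) \<or> (A $$ (0,1) = 0 \<and> A $$ (1,0) = 0)")
      case True
      obtain G R S H where sb: "split_block A 2 2 = (G,R,S,H)" by (cases "split_block A 2 2") auto
      note cc = split_carriers[OF A sb] and e = split_block_eqs[OF sb]
      have "good 2 G"
        by (rule crit2_F2[OF cc(1)]) (use e(1) True ent ch in auto)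
      then show ?thesis by (rule block[OF A sb _ IH[OF cc(4)]])
    next
      case False2: False
      define p where "p = Transposition.transpose (1::nat) 2"
      have p: "p permutes {0..<2+m}" unfolding p_def by (rule tp_permutes) (use m in auto)
      have "good (2+m) (reidx p (2+m) A)"
      proof (rule F2_cond[OF c2 _ IH])
        show "reidx p (2+m) A \<in> carrier_mat (2+m) (2+m)" by simp
        have "0 < m" using m by simp
        moreover have "p 0 = 0" "p 1 = 2" "p 2 = 1" "p (Suc 0) = 2" "p (Suc (Suc 0)) = 1" unfolding p_def
          by (auto simp: transpose_def numeral_2_eq_2)
        ultimately show "\<exists>c<m. (reidx p (2+m) A $$ (0, c+2) \<noteq> 0 \<or> reidx p (2+m) A $$ (1, c+2) \<noteq> 0 \<or>
            reidx p (2+m) A $$ (c+2, 0) \<noteq> 0 \<or> reidx p (2+m) A $$ (c+2, 1) \<noteq> 0)"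
          using False2 by (intro exI[of _ 0]) auto
      qed
      then show ?thesis by (rule good_reidx_back[OF A p])
    qed
  qed
qed

lemma F3_all:
  fixes A :: "'a::{field,finite} mat"
  assumes c3: "CARD('a) = 3"
  shows "n \<ge> 2 \<Longrightarrow> A \<in> carrier_mat n n \<Longrightarrow> good n A"
proof (induction n arbitrary: A rule: less_induct)
  case (less n)
  have ch: "\<And>z. (of_int z :: 'a) = 0 \<longleftrightarrow> 3 dvd z" by (rule F3_ch[OF c3])
  have ent: "\<And>x::'a. \<exists>z::int. z \<in> {-1,0,1} \<and> x = of_int z" by (rule F3_ent[OF c3])
  consider "n = 2" | "n = 3" | "n \<ge> 4" using less.prems(1) by linarith
  then show ?case
  proof cases
    case 1
    have A2: "A \<in> carrier_mat 2 2" using less.prems 1 by simp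
    have "good 2 A" by (rule brute_F3_2[OF A2]) (use ent ch in auto)
    then show ?thesis using 1 by simp
  next
    case 2 then show ?thesis using less.prems F3_n3[OF c3] by simp
  next
    case 3
    define m where "m = n - 2"
    have A: "A \<in> carrier_mat (2+m) (2+m)" using less.prems 3 unfolding carrier_mat_def m_def by simp
    obtain G R S H where sb: "split_block A 2 2 = (G,R,S,H)" by (cases "split_block A 2 2") auto
    note cc = split_carriers[OF A sb]
    have gG: "good 2 G" by (rule brute_F3_2[OF cc(1)]) (use ent ch in auto)
    have gH: "good m H" by (rule less.IH) (use 3 cc(4) in \<open>auto simp: m_def\<close>)
    have g: "good (2+m) A" by (rule block[OF A sb gG gH])
    have e: "2 + m = n" unfolding m_def using 3 by simp
    from g show ?thesis by (simp only: e)
  qed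
qed

lemma P4:
  fixes d0 d1 d2 d3 a01 a10 a02 a20 a03 a30 a12 a21 a13 a31 a23 a32 :: bool
  assumes "\<not> (((d0 \<noteq> d1 \<or> (a01 \<and> a10)) \<and> ((d2 \<noteq> d3 \<or> (a23 \<and> a32)) \<or> \<not> (a20 \<and> a02 \<and> a21 \<and> a12 \<and> a30 \<and> a03 \<and> a31 \<and> a13))) \<or> ((d0 \<noteq> d2 \<or> (a02 \<and> a20)) \<and> ((d1 \<noteq> d3 \<or> (a13 \<and> a31)) \<or> \<not> (a10 \<and> a01 \<and> a12 \<and> a21 \<and> a30 \<and> a03 \<and> a32 \<and> a23))) \<or> ((d0 \<noteq> d3 \<or> (a03 \<and> a30)) \<and> ((d1 \<noteq> d2 \<or> (a12 \<and> a21)) \<or> \<not> (a10 \<and> a01 \<and> a13 \<and> a31 \<and> a20 \<and> a02 \<and> a23 \<and> a32))) \<or> ((d1 \<noteq> d2 \<or> (a12 \<and> a21)) \<and> ((d0 \<noteq> d3 \<or> (a03 \<and> a30)) \<or> \<not> (a01 \<and> a10 \<and> a02 \<and> a20 \<and> a31 \<and> a13 \<and> a32 \<and> a23))) \<or> ((d1 \<noteq> d3 \<or> (a13 \<and> a31)) \<and> ((d0 \<noteq> d2 \<or> (a02 \<and> a20)) \<or> \<not> (a01 \<and> a10 \<and> a03 \<and> a30 \<and> a21 \<and> a12 \<and> a23 \<and> a32))) \<or> ((d2 \<noteq> d3 \<or> (a23 \<and> a32)) \<and> ((d0 \<noteq> d1 \<or> (a01 \<and> a10)) \<or> \<not> (a02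 \<and> a20 \<and> a03 \<and> a30 \<and> a12 \<and> a21 \<and> a13 \<and> a31))))"
  shows "d0 = d1 \<and> d1 = d2 \<and> d2 = d3 \<and> \<not> (a01 \<and> a10)"
  using assms by sat

definition four_cond :: "'a::field mat \<Rightarrow> bool" where
  "four_cond A \<longleftrightarrow> ((A $$ (2,2) \<noteq> A $$ (3,3) \<or> (A $$ (2,3) = 0 \<and> A $$ (3,2) = 0)) \<and> ((A $$ (0,0) \<noteq> A $$ (1,1) \<or> (A $$ (0,1) = 0 \<and> A $$ (1,0) = 0)) \<or> \<not> (A $$ (0,2) = 0 \<and> A $$ (2,0) = 0 \<and> A $$ (0,3) = 0 \<and> A $$ (3,0) = 0 \<and> A $$ (1,2) = 0 \<and> A $$ (2,1) = 0 \<and> A $$ (1,3) = 0 \<and> A $$ (3,1) = 0)))"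

lemma four_base:
  fixes A :: "'a::{field,finite} mat"
  assumes c2: "CARD('a) = 2" and A: "A \<in> carrier_mat 4 4" and fc: "four_cond A"
  shows "good 4 A"
proof -
  have ch: "\<And>z. (of_int z :: 'a) = 0 \<longleftrightarrow> 2 dvd z" by (rule F2_ch[OF c2])
  have ent: "\<And>x::'a. \<exists>z::int. z \<in> {0,1} \<and> x = of_int z" by (rule F2_ent[OF c2])
  have A4: "A \<in> carrier_mat (2+2) (2+2)" using A unfolding carrier_mat_def by simp
  obtain G R S H where sb: "split_block A 2 2 = (G,R,S,H)" by (cases "split_block A 2 2") auto
  note cc = split_carriers[OF A4 sb] and e = split_block_eqs[OF sb]
  have d: "dim_row A = 4" "dim_col A = 4" using A by auto
  have He: "H $$ (0,0) = A $$ (2,2)" "H $$ (1,1) = A $$ (3,3)" "H $$ (0,1) = A $$ (2,3)" "H $$ (1,0) = A $$ (3,2)"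
    using e(4) d by (auto simp: numeral_2_eq_2 numeral_3_eq_3)
  have Ge: "G $$ (0,0) = A $$ (0,0)" "G $$ (1,1) = A $$ (1,1)" "G $$ (0,1) = A $$ (0,1)" "G $$ (1,0) = A $$ (1,0)"
    using e(1) d by (auto simp: numeral_2_eq_2)
  have gH: "good 2 H"
    by (rule crit2_F2[OF cc(4)]) (use fc He ent ch in \<open>auto simp: four_cond_def\<close>)
  show ?thesis
  proof (cases "(A $$ (0,0) \<noteq> A $$ (1,1) \<or> (A $$ (0,1) = 0 \<and> A $$ (1,0) = 0))")
    case True
    have "good 2 G" by (rule crit2_F2[OF cc(1)]) (use True Ge ent ch in auto)
    then have "good (2+2) A" by (rule block[OF A4 sb _ gH])
    then show ?thesis by simp
  next
    case False
    have "(A $$ (0,2) \<noteq> 0 \<or> A $$ (1,2) \<noteq> 0 \<or> A $$ (2,0) \<noteq> 0 \<or> A $$ (2,1) \<noteq> 0) \<or>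
          (A $$ (0,3) \<noteq> 0 \<or> A $$ (1,3) \<noteq> 0 \<or> A $$ (3,0) \<noteq> 0 \<or> A $$ (3,1) \<noteq> 0)"
      using fc False unfolding four_cond_def by blast
    then have "\<exists>c<2. (A $$ (0, c+2) \<noteq> 0 \<or> A $$ (1, c+2) \<noteq> 0 \<or> A $$ (c+2, 0) \<noteq> 0 \<or> A $$ (c+2, 1) \<noteq> 0)"
    proof (rule disjE)
      assume "A $$ (0,2) \<noteq> 0 \<or> A $$ (1,2) \<noteq> 0 \<or> A $$ (2,0) \<noteq> 0 \<or> A $$ (2,1) \<noteq> 0"
      then show ?thesis by (intro exI[of _ 0]) (simp add: numeral_2_eq_2 numeral_3_eq_3)
    next
      assume "A $$ (0,3) \<noteq> 0 \<or> A $$ (1,3) \<noteq> 0 \<or> A $$ (3,0) \<noteq> 0 \<or> A $$ (3,1) \<noteq> 0"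
      then show ?thesis by (intro exI[of _ 1]) (simp add: numeral_2_eq_2 numeral_3_eq_3)
    qed
    then obtain c where c: "c < 2" and nz: "A $$ (0, c+2) \<noteq> 0 \<or> A $$ (1, c+2) \<noteq> 0 \<or> A $$ (c+2, 0) \<noteq> 0 \<or> A $$ (c+2, 1) \<noteq> 0"
      by blast
    have R: "R $$ (0,c) = A $$ (0, c+2)" "R $$ (1,c) = A $$ (1, c+2)" using e(2) d c by auto
    have S: "S $$ (c,0) = A $$ (c+2, 0)" "S $$ (c,1) = A $$ (c+2, 1)" using e(3) d c by auto
    have "good (2+2) A"
    proof (cases "A $$ (0, c+2) \<noteq> 0 \<or> A $$ (1, c+2) \<noteq> 0")
      case True
      then show ?thesis by (intro pair_step[OF c2 A4 sb gH c]) (use R in auto)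
    next
      case False
      then show ?thesis using nz by (intro pair_step_T[OF c2 A4 sb gH cc(4) c]) (use S in auto)
    qed
    then show ?thesis by simp
  qed
qed

lemma four_perm:
  fixes A :: "'a::{field,finite} mat"
  assumes c2: "CARD('a) = 2" and A: "A \<in> carrier_mat 4 4" and p: "p permutes {0..<4}"
    and fc: "four_cond (reidx p 4 A)"
  shows "good 4 A"
  by (rule good_reidx_back[OF A p four_base[OF c2 _ fc]]) simp

lemma conj_diag:
  fixes A :: "'a::comm_ring_1 mat"
  assumes A: "A \<in> carrier_mat n n" and k: "k < n" and l: "l < n" and kl: "k \<noteq> l" and i: "i < n"
  shows "(addrow_mat n 1 k l * A * addrow_mat n (-1) k l) $$ (i,i) =
    (if i = k then A $$ (l,k) + A $$ (k,k) else if i = l then - A $$ (l,k) + A $$ (l,l) else A $$ (i,i))"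
proof -
  have "addrow_mat n 1 k l * A = addrow 1 k l A" by (rule addrow_mat[OF A l, symmetric])
  moreover have "addrow 1 k l A * addrow_mat n (-1) k l = addcol (-1) l k (addrow 1 k l A)"
    by (rule addcol_mat[symmetric]) (use A k in auto)
  ultimately have "addrow_mat n 1 k l * A * addrow_mat n (-1) k l = addcol (-1) l k (addrow 1 k l A)" by simp
  then show ?thesis using A k l kl i by auto
qed

lemma conj_back:
  fixes A :: "'a::field mat"
  assumes A: "A \<in> carrier_mat n n" and k: "k < n" and l: "l < n" and kl: "k \<noteq> l"
    and g: "good n (addrow_mat n 1 k l * A * addrow_mat n (-1) k l)"
  shows "good n A"
proof -
  let ?E = "addrow_mat n (1::'a) k l" and ?F = "addrow_mat n (-1::'a) k l"
  have EF: "?E * ?F = 1\<^sub>m n" using addrow_mat_inv[OF k l kl, of "1::'a"] by simp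
  have FE: "?F * ?E = 1\<^sub>m n" using addrow_mat_inv[OF k l kl, of "-1::'a"] by simp
  have c: "?E * A * ?F \<in> carrier_mat n n" using A by auto
  have "good n (?F * (?E * A * ?F) * ?E)" by (rule good_similar[OF c _ _ FE g]) auto
  moreover have "?F * (?E * A * ?F) * ?E = A"
  proof -
    have h: "\<And>X. X \<in> carrier_mat n n \<Longrightarrow> ?F * (?E * X) = X"
    proof -
      fix X :: "'a mat" assume X: "X \<in> carrier_mat n n"
      have "?F * (?E * X) = (?F * ?E) * X" by (rule assoc_mult_mat[symmetric]) (use X in auto)
      then show "?F * (?E * X) = X" using FE X by simp
    qed
    have Ec: "?E \<in> carrier_mat n n" and Fc: "?F \<in> carrier_mat n n" by auto
    have EA: "?E * A \<in> carrier_mat n n" using A by auto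
    have i1: "?E * A * ?F * ?E = ?E * A * (?F * ?E)"
      by (rule assoc_mult_mat[OF EA Fc Ec])
    also have "\<dots> = ?E * A" using FE right_mult_one_mat[OF EA] by simp
    finally have i2: "?E * A * ?F * ?E = ?E * A" .
    have "?F * (?E * A * ?F) * ?E = ?F * (?E * A * ?F * ?E)"
      by (rule assoc_mult_mat[OF Fc c Ec])
    also have "\<dots> = ?F * (?E * A)" by (simp only: i2)
    also have "\<dots> = A" by (rule h[OF A])
    finally show ?thesis .
  qed
  ultimately show ?thesis by simp
qed

lemma P4e:
  fixes eab eac ead ebc ebd ecd xab xba xac xca xad xda xbc xcb xbd xdb xcd xdc :: bool
  assumes "\<not> (((\<not> ecd \<or> (xcd \<and> xdc)) \<and> ((\<not> eab \<or> (xab \<and> xba)) \<or> \<not> (xac \<and> xca \<and> xad \<and> xda \<and> xbc \<and> xcb \<and> xbd \<and> xdb))) \<or> ((\<not> ebd \<or> (xbd \<and> xdb)) \<and> ((\<not> eac \<or> (xac \<and> xca)) \<or> \<not> (xab \<and> xba \<and> xad \<and> xda \<and> xcb \<and> xbc \<and> xcd \<and> xdc))) \<or> ((\<not> ebc \<or> (xbc \<and> xcb)) \<and> ((\<not> ead \<or> (xad \<and> xda)) \<or> \<not> (xab \<and> xba \<and> xac \<and> xca \<and> xdb \<and> xbd \<and> xdc \<and> xcd))) \<or> ((\<not> ead \<or> (xad \<and> xda)) \<and> ((\<not> ebc \<or> (xbc \<and> xcb)) \<or> \<not> (xba \<and> xab \<and> xbd \<and> xdb \<and> xca \<and> xac \<and>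 xcd \<and> xdc))) \<or> ((\<not> eac \<or> (xac \<and> xca)) \<and> ((\<not> ebd \<or> (xbd \<and> xdb)) \<or> \<not> (xba \<and> xab \<and> xbc \<and> xcb \<and> xda \<and> xad \<and> xdc \<and> xcd))) \<or> ((\<not> eab \<or> (xab \<and> xba)) \<and> ((\<not> ecd \<or> (xcd \<and> xdc)) \<or> \<not> (xca \<and> xac \<and> xcb \<and> xbc \<and> xda \<and> xad \<and> xdb \<and> xbd))))"
    and "eab \<and> ebc \<longrightarrow> eac" "eab \<and> eac \<longrightarrow> ebc" "eac \<and> ebc \<longrightarrow> eab" "eab \<or> ebc \<or> eac" "eab \<and> ebd \<longrightarrow> ead" "eab \<and> ead \<longrightarrow> ebd" "ead \<and> ebd \<longrightarrow> eab" "eab \<or> ebd \<or> ead" "eac \<and> ecd \<longrightarrow> ead" "eac \<and> ead \<longrightarrow> ecd" "ead \<and> ecd \<longrightarrow> eac" "eac \<or> ecd \<or> ead" "ebc \<and> ecd \<longrightarrow> ebd" "ebc \<and> ebd \<longrightarrow> ecd" "ebd \<and> ecd \<longrightarrow> ebc" "ebc \<or> ecd \<or> ebd"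
  shows "eab \<and> ebc \<and> ecd \<and> \<not> (xab \<and> xba)"
  using assms by sat

definition four_part :: "'a::field mat \<Rightarrow> nat \<Rightarrow> nat \<Rightarrow> nat \<Rightarrow> nat \<Rightarrow> bool" where
  "four_part A a b c d \<longleftrightarrow>
    (A $$ (c,c) \<noteq> A $$ (d,d) \<or> (A $$ (c,d) = 0 \<and> A $$ (d,c) = 0)) \<and>
    ((A $$ (a,a) \<noteq> A $$ (b,b) \<or> (A $$ (a,b) = 0 \<and> A $$ (b,a) = 0)) \<or>
     \<not> (A $$ (a,c) = 0 \<and> A $$ (c,a) = 0 \<and> A $$ (a,d) = 0 \<and> A $$ (d,a) = 0 \<and>
          A $$ (b,c) = 0 \<and> A $$ (c,b) = 0 \<and> A $$ (b,d) = 0 \<and> A $$ (d,b) = 0))"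

definition pmap :: "nat \<Rightarrow> nat \<Rightarrow> nat \<Rightarrow> nat \<Rightarrow> nat \<Rightarrow> nat" where
  "pmap a b c d i = (if i = 0 then a else if i = 1 then b else if i = 2 then c else if i = 3 then d else i)"

lemma pmap_permutes:
  assumes "{a,b,c,d} = {0..<4::nat}"
  shows "pmap a b c d permutes {0..<4}"
proof (rule bij_imp_permutes)
  have img: "pmap a b c d ` {0..<4} = {0..<4}"
  proof -
    have e: "{0..<4::nat} = {0,1,2,3}" by auto
    have "pmap a b c d ` {0,1,2,3} = {a,b,c,d}" by (auto simp: pmap_def)
    then show ?thesis using assms e by simp
  qed
  moreover have "card {0..<4::nat} = 4" by simp
  ultimately show "bij_betw (pmap a b c d) {0..<4} {0..<4}"
    by (simp add: bij_betw_def eq_card_imp_inj_on)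
  show "\<And>x. x \<notin> {0..<4} \<Longrightarrow> pmap a b c d x = x" by (simp add: pmap_def)
qed

lemma four_part_perm:
  fixes A :: "'a::{field,finite} mat"
  assumes c2: "CARD('a) = 2" and A: "A \<in> carrier_mat 4 4" and abcd: "{a,b,c,d} = {0..<4::nat}"
    and fp: "four_part A a b c d"
  shows "good 4 A"
proof -
  let ?p = "pmap a b c d"
  have p: "?p permutes {0..<4}" by (rule pmap_permutes[OF abcd])
  have "four_cond (reidx ?p 4 A)"
    using fp unfolding four_cond_def four_part_def by (simp add: pmap_def)
  then show ?thesis by (rule four_perm[OF c2 A p])
qed
lemma F2_four:
  fixes A :: "'a::{field,finite} mat"
  assumes c2: "CARD('a) = 2" and A: "A \<in> carrier_mat 4 4"
  shows "good 4 A"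
proof -
  have u: "\<And>x::'a. x = 0 \<or> x = 1" by (rule F2_univ[OF c2])
  have two: "(1::'a) + 1 = 0" by (rule F2_two[OF c2])
  have g0: "four_part A 0 1 2 3 \<Longrightarrow> good 4 A"
    by (rule four_part_perm[OF c2 A]) auto
  have g1: "four_part A 0 2 1 3 \<Longrightarrow> good 4 A"
    by (rule four_part_perm[OF c2 A]) auto
  have g2: "four_part A 0 3 1 2 \<Longrightarrow> good 4 A"
    by (rule four_part_perm[OF c2 A]) auto
  have g3: "four_part A 1 2 0 3 \<Longrightarrow> good 4 A"
    by (rule four_part_perm[OF c2 A]) auto
  have g4: "four_part A 1 3 0 2 \<Longrightarrow> good 4 A"
    by (rule four_part_perm[OF c2 A]) auto
  have g5: "four_part A 2 3 0 1 \<Longrightarrow> good 4 A"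
    by (rule four_part_perm[OF c2 A]) auto
  show ?thesis
  proof (cases "four_part A 0 1 2 3 \<or> four_part A 0 2 1 3 \<or> four_part A 0 3 1 2 \<or> four_part A 1 2 0 3 \<or> four_part A 1 3 0 2 \<or> four_part A 2 3 0 1")
    case True
    then show ?thesis using g0 g1 g2 g3 g4 g5 by blast
  next
    case False
    have key: "(A $$ (0,0) = A $$ (1,1)) \<and> (A $$ (1,1) = A $$ (2,2)) \<and> (A $$ (2,2) = A $$ (3,3)) \<and> \<not> (A $$ (0,1) = 0 \<and> A $$ (1,0) = 0)"
      apply (rule P4e[where eab = "A $$ (0,0) = A $$ (1,1)" and eac = "A $$ (0,0) = A $$ (2,2)" and ead = "A $$ (0,0) = A $$ (3,3)" and ebc = "A $$ (1,1) = A $$ (2,2)" and ebd = "A $$ (1,1) = A $$ (3,3)" and ecd = "A $$ (2,2) = A $$ (3,3)" and xab = "A $$ (0,1) = 0" and xba = "A $$ (1,0) = 0" and xac = "A $$ (0,2) = 0" and xca = "A $$ (2,0) = 0" and xad = "A $$ (0,3) = 0" and xda = "A $$ (3,0) = 0" and xbc = "A $$ (1,2) = 0" and xcb = "A $$ (2,1) = 0" and xbd = "A $$ (1,3) = 0" and xdb = "A $$ (3,1) = 0" and xcd = "A $$ (2,3) = 0" and xdc = "A $$ (3,2) = 0"])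
      subgoal using False unfolding four_part_def by sat
      using u[of "A $$ (0,0)"] u[of "A $$ (1,1)"] u[of "A $$ (2,2)"] u[of "A $$ (3,3)"] by auto
    have conj: "good 4 A" if k: "k < 2" and l: "l < 2" and kl: "k \<noteq> l" and nz: "A $$ (l,k) \<noteq> 0" for k l
    proof -
      let ?A' = "addrow_mat 4 1 k l * A * addrow_mat 4 (-1) k l"
      have A': "?A' \<in> carrier_mat 4 4" using A by auto
      have lk: "A $$ (l,k) = 1" using nz u by blast
      have kl': "k < 4" "l < 4" using k l by auto
      have dg: "\<And>i. i < 4 \<Longrightarrow> ?A' $$ (i,i) = (if i = k then A $$ (l,k) + A $$ (k,k) else if i = l then - A $$ (l,k) + A $$ (l,l) else A $$ (i,i))"
        by (rule conj_diag[OF A kl' kl])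
      have x: "A $$ (0,0) = A $$ (1,1)" "A $$ (1,1) = A $$ (2,2)" "A $$ (2,2) = A $$ (3,3)" using key by auto
      have n1: "1 + A $$ (0,0) \<noteq> A $$ (0,0)" by simp
      have n2: "- 1 + A $$ (0,0) \<noteq> A $$ (0,0)" by simp
      have fp: "four_part ?A' 0 2 1 3"
      proof -
        have kl01: "(k = 0 \<and> l = 1) \<or> (k = 1 \<and> l = 0)" using k l kl by auto
        have d2': "?A' $$ (2,2) = A $$ (2,2)" using dg[of 2] kl01 by auto
        have d3': "?A' $$ (3,3) = A $$ (3,3)" using dg[of 3] kl01 by auto
        have d2: "?A' $$ (2,2) = A $$ (0,0)" using d2' x by simp
        have d3: "?A' $$ (3,3) = A $$ (0,0)" using d3' x by simp
        have d0: "?A' $$ (0,0) \<noteq> ?A' $$ (2,2)" and d1: "?A' $$ (1,1) \<noteq> ?A' $$ (3,3)"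
        proof -
          from kl01 show "?A' $$ (0,0) \<noteq> ?A' $$ (2,2)"
          proof
            assume h: "k = 0 \<and> l = 1"
            have "?A' $$ (0,0) = A $$ (l,k) + A $$ (k,k)" using dg[of 0] h by simp
            also have "\<dots> = 1 + A $$ (0,0)" using lk h by simp
            finally show ?thesis using d2 n1 by simp
          next
            assume h: "k = 1 \<and> l = 0"
            have "?A' $$ (0,0) = - A $$ (l,k) + A $$ (l,l)" using dg[of 0] h by simp
            also have "\<dots> = - 1 + A $$ (0,0)" using lk h by simp
            finally show ?thesis using d2 n2 by simp
          qed
          from kl01 show "?A' $$ (1,1) \<noteq> ?A' $$ (3,3)"
          proof
            assume h: "k = 0 \<and> l = 1"
            have "?A' $$ (1,1) = - A $$ (l,k) + A $$ (l,l)" using dg[of 1] h by simp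
            also have "\<dots> = - 1 + A $$ (0,0)" using lk h x by simp
            finally show ?thesis using d3 n2 by simp
          next
            assume h: "k = 1 \<and> l = 0"
            have "?A' $$ (1,1) = A $$ (l,k) + A $$ (k,k)" using dg[of 1] h by simp
            also have "\<dots> = 1 + A $$ (0,0)" using lk h x by simp
            finally show ?thesis using d3 n1 by simp
          qed
        qed
        then show ?thesis unfolding four_part_def by blast
      qed
      have "good 4 ?A'" by (rule four_part_perm[OF c2 A' _ fp]) auto
      then show ?thesis by (rule conj_back[OF A kl' kl])
    qed
    show ?thesis
    proof (cases "A $$ (1,0) = 0")
      case True
      then have "A $$ (0,1) \<noteq> 0" using key by blast
      then show ?thesis by (intro conj[of 1 0]) auto
    next
      case False
      then show ?thesis by (intro conj[of 0 1]) auto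
    qed
  qed
qed


lemma F2_all:
  fixes A :: "'a::{field,finite} mat"
  assumes c2: "CARD('a) = 2"
  shows "n \<ge> 3 \<Longrightarrow> A \<in> carrier_mat n n \<Longrightarrow> good n A"
proof (induction n arbitrary: A rule: less_induct)
  case (less n)
  have ch: "\<And>z. (of_int z :: 'a) = 0 \<longleftrightarrow> 2 dvd z" by (rule F2_ch[OF c2])
  have ent: "\<And>x::'a. \<exists>z::int. z \<in> {0,1} \<and> x = of_int z" by (rule F2_ent[OF c2])
  consider "n = 3" | "n = 4" | "n \<ge> 5" using less.prems(1) by linarith
  then show ?case
  proof cases
    case 1
    have A3: "A \<in> carrier_mat 3 3" using less.prems 1 by simp
    have "good 3 A" by (rule brute_F2_3[OF A3]) (use ent ch in auto)
    then show ?thesis using 1 by simp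
  next
    case 2
    have A4: "A \<in> carrier_mat 4 4" using less.prems 2 by simp
    show ?thesis using F2_four[OF c2 A4] 2 by simp
  next
    case 3
    define m where "m = n - 2"
    have A: "A \<in> carrier_mat (2+m) (2+m)" using less.prems 3 unfolding carrier_mat_def m_def by simp
    have IH: "\<And>H::'a mat. H \<in> carrier_mat m m \<Longrightarrow> good m H"
      by (rule less.IH) (use 3 in \<open>auto simp: m_def\<close>)
    have m1: "m \<ge> 1" using 3 unfolding m_def by linarith
    have g: "good (2+m) A" by (rule F2_big[OF c2 A IH m1])
    have e: "2 + m = n" unfolding m_def using 3 by simp
    from g show ?thesis by (simp only: e)
  qed
qed

lemma good_all:
  fixes A :: "'a::{field,finite} mat"
  assumes A: "A \<in> carrier_mat n n" and n1: "n \<ge> 1"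
    and e1: "\<not> (n = 1 \<and> CARD('a) = 2)" and e2: "\<not> (n = 1 \<and> CARD('a) = 3)"
    and e3: "\<not> (n = 2 \<and> CARD('a) = 2)"
  shows "good n A"
proof -
  have "CARD('a) \<ge> 2" by (rule card_ge2)
  then consider "CARD('a) = 2" | "CARD('a) = 3" | "CARD('a) \<ge> 4" by linarith
  then show ?thesis
  proof cases
    case 1
    then have "n \<ge> 3" using n1 e1 e3 by auto
    then show ?thesis by (rule F2_all[OF 1 _ A])
  next
    case 2
    then have "n \<ge> 2" using n1 e2 by auto
    then show ?thesis by (rule F3_all[OF 2 _ A])
  next
    case 3
    show ?thesis by (rule good_big[OF big_field[OF 3] A])
  qed
qed

theorem proposition3p2:
  fixes A :: "('a::{field,finite}) ^'n::finite^'n"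
  assumes "\<not> (CARD('n) = 1 \<and> CARD('a) = 2)"
    and "\<not> (CARD('n) = 1 \<and> CARD('a) = 3)"
    and "\<not> (CARD('n) = 2 \<and> CARD('a) = 2)"
    and "invertible A"
  shows "\<exists>B C :: 'a^'n^'n. invertible B \<and> invertible C \<and>
           fixed_point_free B \<and> fixed_point_free C \<and> A = B ** C"
proof -
  obtain h :: "'n \<Rightarrow> nat" where h: "bij_betw h UNIV {0..<CARD('n)}"
    using ex_bij_betw_finite_nat[of "UNIV :: 'n set"] by (auto simp: atLeast0LessThan)
  define N where "N = CARD('n)"
  have N1: "N \<ge> 1" unfolding N_def by (simp add: Suc_le_eq)
  define Am where "Am = tom h A"
  have Am: "Am \<in> carrier_mat N N" unfolding Am_def N_def by (rule tom_carrier[OF h])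
  have "good N Am" by (rule good_all[OF Am N1]) (use assms in \<open>auto simp: N_def\<close>)
  then obtain Bm where Bm: "Bm \<in> carrier_mat N N" "det Bm \<noteq> 0" "det (Bm - 1\<^sub>m N) \<noteq> 0" "det (Am - Bm) \<noteq> 0"
    unfolding good_def by blast
  define B where "B = fr h Bm"
  have iB: "invertible B" unfolding B_def using fr_invertible[OF h] Bm N_def by blast
  obtain Bi where Bi: "B ** Bi = Finite_Cartesian_Product.mat 1" "Bi ** B = Finite_Cartesian_Product.mat 1"
    using iB unfolding invertible_def by blast
  have iBi: "invertible Bi" using Bi unfolding invertible_def by blast
  define C where "C = Bi ** A"
  have AC: "A = B ** C" unfolding C_def by (simp add: matrix_mul_assoc Bi)
  have iC: "invertible C" unfolding C_def by (rule invertible_mult[OF iBi assms(4)])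
  have BI: "B - Finite_Cartesian_Product.mat 1 = fr h (Bm - 1\<^sub>m N)"
    unfolding B_def N_def using Bm N_def by (simp add: fr_minus[OF h] fr_one[OF h])
  have fB: "fixed_point_free B"
  proof -
    have c: "Bm - 1\<^sub>m N \<in> carrier_mat N N" by (rule minus_carrier_mat) simp
    show ?thesis using fr_invertible[OF h, of "Bm - 1\<^sub>m N"] Bm c N_def
      by (intro fpf_of_inv) (simp add: BI)
  qed
  have AB: "A - B = fr h (Am - Bm)"
    unfolding B_def Am_def using Bm N_def by (simp add: fr_minus[OF h] fr_tom[OF h] tom_carrier[OF h])
  have iAB: "invertible (A - B)" unfolding AB
    by (rule fr_invertible[OF h]) (use Bm(1,4) N_def in \<open>auto intro: minus_carrier_mat\<close>)
  have "C - Finite_Cartesian_Product.mat 1 = Bi ** (A - B)"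
    unfolding C_def by (simp add: mm_diff Bi)
  then have fC: "fixed_point_free C"
    using fpf_of_inv invertible_mult[OF iBi iAB] by metis
  show ?thesis using iB iC fB fC AC by blast
qed

end
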